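(* Let $E$ be a second countable Stone space with at least seven points, and let $\gamma$ be a non-peripheral cut of $E$. Then $\gamma$ is outermost if and only if for every pants decomposition $\Gamma$ of $E$ containing $\gamma$, the vertex $\gamma$ has valence at most two in the adjacency graph $A(\Gamma)$.
   Context: A Stone space is a compact, Hausdorff, totally disconnected space. A cut of $E$ is an unordered partition of $E$ into two disjoint clopen sets $U,V$, written $U\sqcup V$; it is non-peripheral if each of $U,V$ contains at least two points. A non-peripheral cut is outermost if one of its two sides contains exactly two points. Two cuts $U\sqcup V$, $U'\sqcup V'$ cross if all four sets $U\cap U'$, $U\cap V'$, $V\cap U'$, $V\cap V'$ are nonempty; otherwise they are compatible. A pants decomposition of $E$ is a countable collection $\Gamma$ of non-peripheral cuts such that: (1) any two cuts in $\Gamma$ are compatible; (2) every non-peripheral cut $\gamma\notin\Gamma$ crosses some cut of $\Gamma$; (3) every non-peripheral cut $\gamma\notin\Gamma$ crosses only finitely many cuts of $\Gamma$. Two cuts $\gamma_i,\gamma_j\in\Gamma$ are adjacent in $\Gamma$ if there is a non-peripheral cut crossing $\gamma_i$ and $\gamma_j$ and no other cut of $\Gamma$; the adjacency graph $A(\Gamma)$ has vertex set $\Gamma$ and edges between adjacent cuts. *)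

theory Defs
  imports "HOL-Analysis.Analysis"
begin

definition totally_disconnected_space :: "'a topology \<Rightarrow> bool" where
  "totally_disconnected_space X \<longleftrightarrow>
     (\<forall>S. connectedin X S \<longrightarrow> (\<forall>x\<in>S. \<forall>y\<in>S. x = y))"

definition stone_space :: "'a topology \<Rightarrow> bool" where
  "stone_space X \<longleftrightarrow> compact_space X \<and> Hausdorff_space X \<and> totally_disconnected_space X"

definition clopenin :: "'a topology \<Rightarrow> 'a set \<Rightarrow> bool" where
  "clopenin X U \<longleftrightarrow> openin X U \<and> closedin X U"

definition is_cut :: "'a topology \<Rightarrow> 'a set set \<Rightarrow> bool" where
  "is_cut X c \<longleftrightarrow> (\<exists>U V. c = {U, V} \<and> clopenin X U \<and> clopenin X V \<and>
      U \<inter> V = {} \<and> U \<union> V = topspace X \<and> U \<noteq> {} \<and> V \<noteq> {})"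

definition two_points :: "'a set \<Rightarrow> bool" where
  "two_points U \<longleftrightarrow> (\<exists>x y. x \<in> U \<and> y \<in> U \<and> x \<noteq> y)"

definition nonperipheral_cut :: "'a topology \<Rightarrow> 'a set set \<Rightarrow> bool" where
  "nonperipheral_cut X c \<longleftrightarrow> is_cut X c \<and> (\<forall>U\<in>c. two_points U)"

definition outermost_cut :: "'a topology \<Rightarrow> 'a set set \<Rightarrow> bool" where
  "outermost_cut X c \<longleftrightarrow> nonperipheral_cut X c \<and> (\<exists>U\<in>c. finite U \<and> card U = 2)"

definition crosses :: "'a set set \<Rightarrow> 'a set set \<Rightarrow> bool" where
  "crosses c d \<longleftrightarrow> (\<forall>U\<in>c. \<forall>U'\<in>d. U \<inter> U' \<noteq> {})"

definition compatible :: "'a set set \<Rightarrow> 'a set set \<Rightarrow> bool" where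
  "compatible c d \<longleftrightarrow> \<not> crosses c d"

definition pants_decomposition :: "'a topology \<Rightarrow> 'a set set set \<Rightarrow> bool" where
  "pants_decomposition X \<Gamma> \<longleftrightarrow>
     countable \<Gamma> \<and> (\<forall>c\<in>\<Gamma>. nonperipheral_cut X c) \<and>
     (\<forall>c\<in>\<Gamma>. \<forall>d\<in>\<Gamma>. compatible c d) \<and>
     (\<forall>g. nonperipheral_cut X g \<and> g \<notin> \<Gamma> \<longrightarrow> (\<exists>c\<in>\<Gamma>. crosses g c)) \<and>
     (\<forall>g. nonperipheral_cut X g \<and> g \<notin> \<Gamma> \<longrightarrow> finite {c\<in>\<Gamma>. crosses g c})"

definition adjacent_in :: "'a topology \<Rightarrow> 'a set set set \<Rightarrow> 'a set set \<Rightarrow> 'a set set \<Rightarrow> bool" where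
  "adjacent_in X \<Gamma> c d \<longleftrightarrow> c \<in> \<Gamma> \<and> d \<in> \<Gamma> \<and> c \<noteq> d \<and>
     (\<exists>g. nonperipheral_cut X g \<and> crosses g c \<and> crosses g d \<and>
          (\<forall>e\<in>\<Gamma>. crosses g e \<longrightarrow> e = c \<or> e = d))"

definition valence_le_two :: "'a topology \<Rightarrow> 'a set set set \<Rightarrow> 'a set set \<Rightarrow> bool" where
  "valence_le_two X \<Gamma> c \<longleftrightarrow>
     finite {d. adjacent_in X \<Gamma> c d} \<and> card {d. adjacent_in X \<Gamma> c d} \<le> 2"

end

theory Submission
  imports Defs
begin


lemma stone_sep:
  assumes "stone_space X" "x \<in> topspace X" "y \<in> topspace X" "x \<noteq> y"
  shows "\<exists>T. clopenin X T \<and> x \<in> T \<and> y \<notin> T"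
proof -
  have cs: "compact_space X" and H: "Hausdorff_space X" and td: "totally_disconnected_space X"
    using assms(1) by (auto simp: stone_space_def)
  have lc: "locally_compact_space X"
    using cs by (simp add: compact_imp_locally_compact_space)
  let ?C = "quasi_component_of_set X x"
  have Cq: "?C \<in> quasi_components_of X"
    using assms(2) by (simp add: quasi_component_in_quasi_components_of)
  have "compactin X ?C"
    by (rule closedin_compact_space[OF cs closedin_quasi_component_of])
  then have "?C \<in> connected_components_of X"
    using compact_quasi_eq_connected_components_of[OF lc H \<open>compactin X ?C\<close>] Cq by simp
  then have "connectedin X ?C"
    by (rule connectedin_connected_components_of)
  moreover have "x \<in> ?C" using assms(2) by simp
  ultimately have "\<not> quasi_component_of X x y"
    using td assms(4) unfolding totally_disconnected_space_def
    by (metis mem_Collect_eq)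
  then obtain T where "closedin X T" "openin X T" "\<not> (x \<in> T \<longleftrightarrow> y \<in> T)"
    using assms(2,3) unfolding quasi_component_of_def by blast
  then show ?thesis
  proof (cases "x \<in> T")
    case True then show ?thesis using \<open>closedin X T\<close> \<open>openin X T\<close> \<open>\<not> (x \<in> T \<longleftrightarrow> y \<in> T)\<close>
      by (auto simp: clopenin_def)
  next
    case False
    then have "clopenin X (topspace X - T)"
      using \<open>closedin X T\<close> \<open>openin X T\<close> by (auto simp: clopenin_def)
    then show ?thesis using False assms(2) \<open>\<not> (x \<in> T \<longleftrightarrow> y \<in> T)\<close> by blast
  qed
qed

lemma countable_clopens:
  assumes "compact_space X" "second_countable X"
  shows "countable {T. clopenin X T}"
proof -
  obtain \<B> where B: "countable \<B>" "\<forall>V\<in>\<B>. openin X V"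
    "\<forall>U x. openin X U \<and> x \<in> U \<longrightarrow> (\<exists>V\<in>\<B>. x \<in> V \<and> V \<subseteq> U)"
    using assms(2) unfolding second_countable_def by blast
  have "{T. clopenin X T} \<subseteq> Union ` {F. finite F \<and> F \<subseteq> \<B>}"
  proof
    fix T assume "T \<in> {T. clopenin X T}"
    then have T: "openin X T" "closedin X T" by (auto simp: clopenin_def)
    have "compactin X T" by (rule closedin_compact_space[OF assms(1) T(2)])
    moreover have "T \<subseteq> \<Union>{V\<in>\<B>. V \<subseteq> T}" using B(3) T(1) by blast
    moreover have "\<forall>U\<in>{V\<in>\<B>. V \<subseteq> T}. openin X U" using B(2) by blast
    ultimately have "\<exists>F. finite F \<and> F \<subseteq> {V\<in>\<B>. V \<subseteq> T} \<and> T \<subseteq> \<Union>F"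
      unfolding compactin_def by blast
    then obtain F where F: "finite F" "F \<subseteq> {V\<in>\<B>. V \<subseteq> T}" "T \<subseteq> \<Union>F"
      by blast
    then have "T = \<Union>F" by blast
    then show "T \<in> Union ` {F. finite F \<and> F \<subseteq> \<B>}" using F by blast
  qed
  moreover have "countable {F. finite F \<and> F \<subseteq> \<B>}"
    using countable_Collect_finite_subset[OF B(1)] by simp
  ultimately show ?thesis by (meson countable_image countable_subset)
qed


lemma clopen_diff: "clopenin X U \<Longrightarrow> clopenin X (topspace X - U)"
  by (auto simp: clopenin_def)

lemma clopen_Un: "clopenin X U \<Longrightarrow> clopenin X V \<Longrightarrow> clopenin X (U \<union> V)"
  by (auto simp: clopenin_def)

lemma clopen_Int: "clopenin X U \<Longrightarrow> clopenin X V \<Longrightarrow> clopenin X (U \<inter> V)"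
  by (auto simp: clopenin_def)

lemma clopen_sub: "clopenin X U \<Longrightarrow> U \<subseteq> topspace X"
  by (auto simp: clopenin_def openin_subset)

lemma cut_side:
  assumes "is_cut X c" "U \<in> c"
  shows "c = {U, topspace X - U} \<and> clopenin X U \<and> U \<subseteq> topspace X \<and> U \<noteq> {} \<and> topspace X - U \<noteq> {}"
proof -
  obtain P Q where PQ: "c = {P, Q}" "clopenin X P" "clopenin X Q" "P \<inter> Q = {}"
    "P \<union> Q = topspace X" "P \<noteq> {}" "Q \<noteq> {}"
    using assms(1) unfolding is_cut_def by blast
  have "Q = topspace X - P" "P = topspace X - Q" using PQ by auto
  then show ?thesis using PQ assms(2) by auto
qed

lemma np_side:
  assumes "nonperipheral_cut X c" "U \<in> c"
  shows "c = {U, topspace X - U} \<and> clopenin X U \<and> U \<subseteq> topspace X \<and> two_points U \<and> two_points (topspace X - U)"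
proof -
  have "is_cut X c" "\<forall>U\<in>c. two_points U" using assms(1) by (auto simp: nonperipheral_cut_def)
  then show ?thesis using cut_side[of X c U] assms(2) by auto
qed

lemma np_cut_intro:
  assumes "clopenin X U" "two_points U" "two_points (topspace X - U)"
  shows "nonperipheral_cut X {U, topspace X - U}"
proof -
  have "U \<subseteq> topspace X" using assms(1) by (rule clopen_sub)
  moreover have "U \<noteq> {}" "topspace X - U \<noteq> {}" using assms(2,3) by (auto simp: two_points_def)
  ultimately show ?thesis using assms clopen_diff[OF assms(1)]
    unfolding nonperipheral_cut_def is_cut_def by blast
qed

lemma card2_sub:
  assumes "finite A" "card A = 2" "U \<subseteq> A" "two_points U"
  shows "U = A"
proof -
  obtain x y where "x \<in> U" "y \<in> U" "x \<noteq> y" using assms(4) by (auto simp: two_points_def)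
  then have "card {x,y} = 2" by simp
  moreover have "{x,y} \<subseteq> U" using \<open>x \<in> U\<close> \<open>y \<in> U\<close> by simp
  ultimately have "card A \<le> card U" "card U \<le> card A"
    using assms card_mono[OF _ \<open>{x,y} \<subseteq> U\<close>] card_mono[OF assms(1,3)] finite_subset[OF assms(3,1)]
    by auto
  then show ?thesis using card_subset_eq[OF assms(1,3)] by simp
qed

lemma le_two_card:
  assumes "\<And>a b c. a \<in> S \<Longrightarrow> b \<in> S \<Longrightarrow> c \<in> S \<Longrightarrow> a \<noteq> b \<Longrightarrow> a \<noteq> c \<Longrightarrow> b \<noteq> c \<Longrightarrow> False"
  shows "finite S \<and> card S \<le> 2"
proof -
  have "\<exists>a b. S \<subseteq> {a, b}"
  proof (cases "S = {}")
    case True then show ?thesis by blast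
  next
    case False
    then obtain a where a: "a \<in> S" by blast
    show ?thesis
    proof (cases "S \<subseteq> {a}")
      case True then show ?thesis by blast
    next
      case False
      then obtain b where b: "b \<in> S" "b \<noteq> a" using a by blast
      have "S \<subseteq> {a, b}" using assms a b by blast
      then show ?thesis by blast
    qed
  qed
  then obtain a b where ab: "S \<subseteq> {a, b}" by blast
  have f: "finite {a,b}" by simp
  have "card {a,b} \<le> 2" by (simp add: card_insert_if)
  then show ?thesis using card_mono[OF f ab] finite_subset[OF ab f] by simp
qed

locale fwd =
  fixes X :: "'a topology" and \<Gamma> :: "'a set set set" and \<gamma> :: "'a set set" and A :: "'a set"
  assumes pd: "pants_decomposition X \<Gamma>" and g\<Gamma>: "\<gamma> \<in> \<Gamma>" and A\<gamma>: "A \<in> \<gamma>"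
    and finA: "finite A" and cardA: "card A = 2"
begin

abbreviation "E \<equiv> topspace X"

lemma np: "c \<in> \<Gamma> \<Longrightarrow> nonperipheral_cut X c"
  using pd by (auto simp: pants_decomposition_def)

lemma comp: "c \<in> \<Gamma> \<Longrightarrow> d \<in> \<Gamma> \<Longrightarrow> \<not> crosses c d"
  using pd by (auto simp: pants_decomposition_def compatible_def)

lemma gA: "\<gamma> = {A, E - A}" "clopenin X A" "A \<subseteq> E" "two_points A" "two_points (E - A)"
  using np_side[OF np[OF g\<Gamma>] A\<gamma>] by auto

lemma Ane: "A \<noteq> {}" using gA(4) by (auto simp: two_points_def)

lemma side_ex:
  assumes "d \<in> \<Gamma>" "d \<noteq> \<gamma>"
  shows "\<exists>D\<in>d. D \<inter> A = {}"
proof -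
  have "\<not> crosses d \<gamma>" using comp assms(1) g\<Gamma> by blast
  then obtain U U' where U: "U \<in> d" "U' \<in> \<gamma>" "U \<inter> U' = {}" unfolding crosses_def by blast
  have Us: "d = {U, E - U}" "U \<subseteq> E" "two_points U" using np_side[OF np[OF assms(1)] U(1)] by auto
  show ?thesis
  proof (cases "U' = A")
    case True then show ?thesis using U by blast
  next
    case False
    then have "U' = E - A" using U(2) gA(1) by auto
    then have "U \<subseteq> A" using U(3) Us(2) by blast
    then have "U = A" using card2_sub[OF finA cardA _ Us(3)] by simp
    then have "d = \<gamma>" using Us(1) gA(1) by simp
    then show ?thesis using assms(2) by simp
  qed
qed

lemma side_facts:
  assumes "d \<in> \<Gamma>" "D \<in> d"
  shows "d = {D, E - D}" "clopenin X D" "D \<subseteq> E" "two_points D" "two_points (E - D)"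
  using np_side[OF np[OF assms(1)] assms(2)] by auto

lemma side_uniq:
  assumes "d \<in> \<Gamma>" "D \<in> d" "D \<inter> A = {}" "D' \<in> d" "D' \<inter> A = {}"
  shows "D = D'"
proof -
  have "d = {D, E - D}" using side_facts assms by blast
  then have "D' = D \<or> D' = E - D" using assms(4) by auto
  moreover have "(E - D) \<inter> A \<noteq> {}" using assms(3) gA(3) Ane by blast
  ultimately show ?thesis using assms(5) by auto
qed

lemma maxl:
  assumes adj: "adjacent_in X \<Gamma> \<gamma> d" and D: "D \<in> d" "D \<inter> A = {}"
    and e: "e \<in> \<Gamma>" "e \<noteq> \<gamma>" "D' \<in> e" "D' \<inter> A = {}" "D \<subseteq> D'"
  shows "e = d"
proof -
  obtain g where g: "nonperipheral_cut X g" "crosses g \<gamma>" "crosses g d"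
      "\<forall>e\<in>\<Gamma>. crosses g e \<longrightarrow> e = \<gamma> \<or> e = d"
    using adj unfolding adjacent_in_def by blast
  have ef: "e = {D', E - D'}" "D' \<subseteq> E" using side_facts e(1,3) by auto
  have "crosses g e"
    unfolding crosses_def
  proof (intro ballI)
    fix W U' assume W: "W \<in> g" and U': "U' \<in> e"
    have "W \<inter> D \<noteq> {}" using g(3) W D(1) unfolding crosses_def by blast
    moreover have "W \<inter> A \<noteq> {}" using g(2) W A\<gamma> unfolding crosses_def by blast
    ultimately show "W \<inter> U' \<noteq> {}" using U' ef e(4,5) gA(3) by blast
  qed
  then show ?thesis using g(4) e(1,2) by blast
qed

lemma adjD: "adjacent_in X \<Gamma> \<gamma> d \<Longrightarrow> d \<in> \<Gamma> \<and> d \<noteq> \<gamma>"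
  unfolding adjacent_in_def by auto

lemma disj:
  assumes a1: "adjacent_in X \<Gamma> \<gamma> d1" and a2: "adjacent_in X \<Gamma> \<gamma> d2" and ne: "d1 \<noteq> d2"
    and D1: "D1 \<in> d1" "D1 \<inter> A = {}" and D2: "D2 \<in> d2" "D2 \<inter> A = {}"
  shows "D1 \<inter> D2 = {}"
proof -
  have d1: "d1 \<in> \<Gamma>" "d1 \<noteq> \<gamma>" and d2: "d2 \<in> \<Gamma>" "d2 \<noteq> \<gamma>" using adjD a1 a2 by auto
  have f1: "d1 = {D1, E - D1}" "D1 \<subseteq> E" using side_facts d1(1) D1(1) by auto
  have f2: "d2 = {D2, E - D2}" "D2 \<subseteq> E" using side_facts d2(1) D2(1) by auto
  have "\<not> crosses d1 d2" using comp d1 d2 by blast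
  then obtain U U' where U: "U \<in> d1" "U' \<in> d2" "U \<inter> U' = {}" unfolding crosses_def by blast
  have "(E - D1) \<inter> (E - D2) \<noteq> {}" using D1 D2 gA(3) Ane by blast
  moreover have "\<not> D1 \<subseteq> D2" using maxl[OF a1 D1 d2 D2] ne by auto
  moreover have "\<not> D2 \<subseteq> D1" using maxl[OF a2 D2 d1 D1] ne by auto
  ultimately show ?thesis using U f1 f2 by auto
qed

lemma no_three:
  assumes a1: "adjacent_in X \<Gamma> \<gamma> d1" and a2: "adjacent_in X \<Gamma> \<gamma> d2" and a3: "adjacent_in X \<Gamma> \<gamma> d3"
    and ne: "d1 \<noteq> d2" "d1 \<noteq> d3" "d2 \<noteq> d3"
  shows False
proof -
  have d1: "d1 \<in> \<Gamma>" "d1 \<noteq> \<gamma>" and d2: "d2 \<in> \<Gamma>" "d2 \<noteq> \<gamma>" and d3: "d3 \<in> \<Gamma>" "d3 \<noteq> \<gamma>"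
    using adjD a1 a2 a3 by auto
  obtain D1 where D1: "D1 \<in> d1" "D1 \<inter> A = {}" using side_ex d1 by blast
  obtain D2 where D2: "D2 \<in> d2" "D2 \<inter> A = {}" using side_ex d2 by blast
  obtain D3 where D3: "D3 \<in> d3" "D3 \<inter> A = {}" using side_ex d3 by blast
  have f1: "d1 = {D1, E - D1}" "clopenin X D1" "D1 \<subseteq> E" "two_points D1"
    using side_facts d1(1) D1(1) by auto
  have f2: "d2 = {D2, E - D2}" "D2 \<subseteq> E" "two_points D2" using side_facts d2(1) D2(1) by auto
  have f3: "D3 \<subseteq> E" "two_points D3" using side_facts d3(1) D3(1) by auto
  have D3ne: "D3 \<noteq> {}" using f3(2) by (auto simp: two_points_def)
  have i12: "D1 \<inter> D2 = {}" using disj[OF a1 a2 ne(1) D1 D2] .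
  have i13: "D1 \<inter> D3 = {}" using disj[OF a1 a3 ne(2) D1 D3] .
  have i23: "D2 \<inter> D3 = {}" using disj[OF a2 a3 ne(3) D2 D3] .
  define H where "H = A \<union> D1"
  have Hc: "clopenin X H" unfolding H_def using clopen_Un gA(2) f1(2) by blast
  have Ht: "two_points H" using gA(4) unfolding H_def two_points_def by blast
  have D2H: "D2 \<subseteq> E - H" using i12 D2(2) f2(2) unfolding H_def by blast
  have D3H: "D3 \<subseteq> E - H" using i13 D3(2) f3(1) unfolding H_def by blast
  have Hct: "two_points (E - H)" using f2(3) D2H unfolding two_points_def by blast
  let ?h = "{H, E - H}"
  have hnp: "nonperipheral_cut X ?h" by (rule np_cut_intro[OF Hc Ht Hct])
  show False
  proof (cases "?h \<in> \<Gamma>")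
    case True
    have "?h \<noteq> \<gamma>"
    proof
      assume "?h = \<gamma>"
      then have "H = A \<or> H = E - A" using gA(1) by (auto simp: doubleton_eq_iff)
      moreover have "H \<noteq> A" using f1(4) D1(2) unfolding H_def two_points_def by blast
      moreover have "H \<noteq> E - A" using Ane unfolding H_def by blast
      ultimately show False by blast
    qed
    moreover have "(E - H) \<inter> A = {}" unfolding H_def by blast
    ultimately have "?h = d2" using maxl[OF a2 D2 True] D2H by blast
    then have "E - H \<in> d2" by blast
    then have "E - H = D2 \<or> E - H = E - D2" using f2(1) by auto
    moreover have "E - H \<noteq> E - D2" using D2(2) gA(3) Ane f2(2) unfolding H_def by blast
    ultimately have "E - H = D2" by blast
    then show False using D3H i23 D3ne by blast
  next
    case False
    then obtain c where c: "c \<in> \<Gamma>" "crosses ?h c" using pd hnp unfolding pants_decomposition_def by blast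
    show False
    proof (cases "c = \<gamma>")
      case True
      then have "(E - H) \<inter> A \<noteq> {}" using c(2) A\<gamma> unfolding crosses_def by blast
      then show False unfolding H_def by blast
    next
      case cne: False
      obtain Dc where Dc: "Dc \<in> c" "Dc \<inter> A = {}" using side_ex c(1) cne by blast
      have fc: "c = {Dc, E - Dc}" "Dc \<subseteq> E" using side_facts c(1) Dc(1) by auto
      have hc1: "H \<inter> Dc \<noteq> {}" "(E - H) \<inter> Dc \<noteq> {}"
        using c(2) Dc(1) unfolding crosses_def by blast+
      have "\<not> crosses c d1" using comp c(1) d1(1) by blast
      then obtain U U' where U: "U \<in> c" "U' \<in> d1" "U \<inter> U' = {}" unfolding crosses_def by blast
      have "(E - Dc) \<inter> (E - D1) \<noteq> {}" using Dc(2) D1(2) gA(3) Ane by blast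
      then have "Dc \<inter> D1 = {} \<or> Dc \<subseteq> D1 \<or> D1 \<subseteq> Dc" using U fc f1(1,3) by auto
      then show False
      proof (elim disjE)
        assume "Dc \<inter> D1 = {}" then show False using hc1(1) Dc(2) unfolding H_def by blast
      next
        assume "Dc \<subseteq> D1" then show False using hc1(2) unfolding H_def by blast
      next
        assume "D1 \<subseteq> Dc"
        then have "c = d1" using maxl[OF a1 D1 c(1) cne Dc(1,2)] by blast
        then have "Dc = D1" using side_uniq[OF d1(1) _ Dc(2) D1] Dc(1) by blast
        then show False using hc1(2) unfolding H_def by blast
      qed
    qed
  qed
qed

lemma valence: "valence_le_two X \<Gamma> \<gamma>"
  unfolding valence_le_two_def
  by (rule le_two_card) (use no_three in blast)

end

lemma forward:
  assumes "pants_decomposition X \<Gamma>" "\<gamma> \<in> \<Gamma>" "outermost_cut X \<gamma>"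
  shows "valence_le_two X \<Gamma> \<gamma>"
proof -
  obtain A where "A \<in> \<gamma>" "finite A" "card A = 2" using assms(3) unfolding outermost_cut_def by blast
  then show ?thesis using fwd.valence fwd.intro assms(1,2) by metis
qed



definition cutsOf :: "'a topology \<Rightarrow> 'a set set \<Rightarrow> 'a set set set" where
  "cutsOf X \<N> = (\<lambda>N. {N, topspace X - N}) ` {N\<in>\<N>. two_points N \<and> two_points (topspace X - N)}"

locale tree =
  fixes X :: "'a topology" and \<N> :: "'a set set"
  assumes cnt: "countable \<N>"
    and clo: "\<And>N. N \<in> \<N> \<Longrightarrow> clopenin X N"
    and lam: "\<And>N M. N \<in> \<N> \<Longrightarrow> M \<in> \<N> \<Longrightarrow> N \<subseteq> M \<or> M \<subseteq> N \<or> N \<inter> M = {}"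
    and root: "topspace X \<in> \<N>"
    and child: "\<And>N. N \<in> \<N> \<Longrightarrow> two_points N \<Longrightarrow>
        \<exists>N1\<in>\<N>. \<exists>N2\<in>\<N>. N1 \<inter> N2 = {} \<and> N1 \<union> N2 = N \<and> N1 \<noteq> {} \<and> N2 \<noteq> {}"
    and fin: "\<And>T. clopenin X T \<Longrightarrow> finite {N\<in>\<N>. N \<inter> T \<noteq> {} \<and> N - T \<noteq> {}}"
begin

abbreviation "E \<equiv> topspace X"

lemma crosses_pair: "crosses {A, B} {C, D} \<longleftrightarrow> A \<inter> C \<noteq> {} \<and> A \<inter> D \<noteq> {} \<and> B \<inter> C \<noteq> {} \<and> B \<inter> D \<noteq> {}"
  unfolding crosses_def by auto

lemma sub: "N \<in> \<N> \<Longrightarrow> N \<subseteq> E" using clo clopen_sub by blast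

lemma in_cuts: "N \<in> \<N> \<Longrightarrow> two_points N \<Longrightarrow> two_points (E - N) \<Longrightarrow> {N, E - N} \<in> cutsOf X \<N>"
  unfolding cutsOf_def by blast

lemma g_in:
  assumes g: "nonperipheral_cut X g" "G \<in> g" and P: "P \<in> \<N>"
    and GP: "G = P \<or> G = E - P"
  shows "g \<in> cutsOf X \<N>"
proof -
  have gf: "g = {G, E - G}" "G \<subseteq> E" "two_points G" "two_points (E - G)" using np_side[OF g] by auto
  show ?thesis
  proof (cases "G = P")
    case True then show ?thesis using in_cuts[OF P] gf by simp
  next
    case False
    then have "G = E - P" using GP by simp
    moreover have "E - (E - P) = P" using sub[OF P] by blast
    ultimately have "g = {P, E - P}" "two_points P" "two_points (E - P)" using gf by auto
    then show ?thesis using in_cuts[OF P] by simp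
  qed
qed

lemma p_np: "c \<in> cutsOf X \<N> \<Longrightarrow> nonperipheral_cut X c"
proof -
  assume "c \<in> cutsOf X \<N>"
  then obtain N where N: "N \<in> \<N>" "two_points N" "two_points (E - N)" "c = {N, E - N}"
    unfolding cutsOf_def by blast
  show "nonperipheral_cut X c" unfolding N(4) by (rule np_cut_intro[OF clo[OF N(1)] N(2,3)])
qed

lemma p_comp: "c \<in> cutsOf X \<N> \<Longrightarrow> d \<in> cutsOf X \<N> \<Longrightarrow> compatible c d"
proof -
  assume "c \<in> cutsOf X \<N>" "d \<in> cutsOf X \<N>"
  then obtain N M where NM: "N \<in> \<N>" "c = {N, E - N}" "M \<in> \<N>" "d = {M, E - M}"
    unfolding cutsOf_def by blast
  have "N \<subseteq> M \<or> M \<subseteq> N \<or> N \<inter> M = {}" using lam NM(1,3) by blast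
  then have "N \<inter> (E - M) = {} \<or> (E - N) \<inter> M = {} \<or> N \<inter> M = {}" by blast
  then show "compatible c d" unfolding compatible_def crosses_def NM(2,4) by blast
qed

lemma gfacts:
  assumes "nonperipheral_cut X g"
  obtains G where "g = {G, E - G}" "G \<subseteq> E" "two_points G" "two_points (E - G)" "clopenin X G" "G \<in> g"
proof -
  obtain G where G: "G \<in> g" using assms unfolding nonperipheral_cut_def is_cut_def by blast
  show ?thesis using np_side[OF assms G] G that by blast
qed

lemma p_fin: "nonperipheral_cut X g \<Longrightarrow> finite {c \<in> cutsOf X \<N>. crosses g c}"
proof -
  assume g: "nonperipheral_cut X g"
  obtain G where gf: "g = {G, E - G}" "G \<subseteq> E" "two_points G" "two_points (E - G)" "clopenin X G" "G \<in> g"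
    by (rule gfacts[OF g])
  have "{c \<in> cutsOf X \<N>. crosses g c} \<subseteq> (\<lambda>N. {N, E - N}) ` {N\<in>\<N>. N \<inter> G \<noteq> {} \<and> N - G \<noteq> {}}"
  proof
    fix c assume c: "c \<in> {c \<in> cutsOf X \<N>. crosses g c}"
    then have "c \<in> cutsOf X \<N>" by blast
    then obtain N where N: "N \<in> \<N>" "c = {N, E - N}" unfolding cutsOf_def by auto
    have "crosses g c" using c by blast
    then have "G \<inter> N \<noteq> {}" "(E - G) \<inter> N \<noteq> {}" unfolding gf(1) N(2) crosses_pair by simp_all
    then have "N \<inter> G \<noteq> {} \<and> N - G \<noteq> {}" by blast
    then show "c \<in> (\<lambda>N. {N, E - N}) ` {N\<in>\<N>. N \<inter> G \<noteq> {} \<and> N - G \<noteq> {}}" using N by blast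
  qed
  then show "finite {c \<in> cutsOf X \<N>. crosses g c}"
    by (rule finite_subset) (rule finite_imageI[OF fin[OF gf(5)]])
qed

lemma p_max:
  assumes g: "nonperipheral_cut X g" "g \<notin> cutsOf X \<N>"
  shows "\<exists>c\<in>cutsOf X \<N>. crosses g c"
proof (rule ccontr)
  assume nc: "\<not> (\<exists>c\<in>cutsOf X \<N>. crosses g c)"
  obtain G where gf: "g = {G, E - G}" "G \<subseteq> E" "two_points G" "two_points (E - G)" "clopenin X G" "G \<in> g"
    by (rule gfacts[OF g(1)])
  let ?S = "{N\<in>\<N>. N \<inter> G \<noteq> {} \<and> N - G \<noteq> {}}"
  have "G \<noteq> {}" "E - G \<noteq> {}" using gf(3,4) unfolding two_points_def by blast+
  then have "E \<in> ?S" using root gf(2) by blast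
  then have Sne: "?S \<noteq> {}" by blast
  have "\<exists>m\<in>?S. \<forall>b\<in>?S. b \<le> m \<longrightarrow> m = b"
    by (rule finite_has_minimal[OF fin[OF gf(5)] Sne])
  then obtain N where N: "N \<in> ?S" "\<forall>b\<in>?S. b \<subseteq> N \<longrightarrow> N = b"
    by blast
  have NN: "N \<in> \<N>" "N \<inter> G \<noteq> {}" "N - G \<noteq> {}" using N(1) by auto
  have Ntp: "two_points N" using NN(2,3) unfolding two_points_def by blast
  obtain N1 N2 where c: "N1 \<in> \<N>" "N2 \<in> \<N>" "N1 \<inter> N2 = {}" "N1 \<union> N2 = N" "N1 \<noteq> {}" "N2 \<noteq> {}"
    using child[OF NN(1) Ntp] by blast
  have "N1 \<noteq> N" using c(3,4,6) by blast
  then have "N1 \<notin> ?S" using N(2) c(4) by blast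
  then have n1: "N1 \<inter> G = {} \<or> N1 \<subseteq> G" using c(1) by blast
  have "N2 \<noteq> N" using c(3,4,5) by blast
  then have "N2 \<notin> ?S" using N(2) c(4) by blast
  then have n2: "N2 \<inter> G = {} \<or> N2 \<subseteq> G" using c(2) by blast
  have cases: "(N1 \<subseteq> G \<and> N2 \<inter> G = {}) \<or> (N2 \<subseteq> G \<and> N1 \<inter> G = {})"
    using n1 n2 c(4,5,6) NN(2,3) by blast
  have key: "G = P \<or> G = E - Q" if PQ: "P \<subseteq> G" "Q \<inter> G = {}" "P \<union> Q = N" "P \<inter> Q = {}"
     "P \<noteq> {}" "Q \<noteq> {}" for P Q
  proof (cases "two_points (E - N)")
    case True
    have "{N, E - N} \<in> cutsOf X \<N>" by (rule in_cuts[OF NN(1) Ntp True])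
    then have "\<not> crosses g {N, E - N}" using nc by blast
    moreover have "G \<inter> N \<noteq> {}" "(E - G) \<inter> N \<noteq> {}" using PQ sub[OF NN(1)] by blast+
    ultimately have "G \<inter> (E - N) = {} \<or> (E - G) \<inter> (E - N) = {}"
      unfolding gf(1) crosses_pair by blast
    then show ?thesis
    proof
      assume "G \<inter> (E - N) = {}"
      then have "G \<subseteq> N" using gf(2) by blast
      then have "G = P" using PQ by blast
      then show ?thesis by blast
    next
      assume "(E - G) \<inter> (E - N) = {}"
      then have "E - G \<subseteq> N" by blast
      then have "E - G = Q" using PQ sub[OF NN(1)] by blast
      then have "G = E - Q" using gf(2) by blast
      then show ?thesis by blast
    qed
  next
    case False
    then obtain p where p: "E - N \<subseteq> {p}" unfolding two_points_def by blast
    show ?thesis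
    proof (cases "p \<in> G")
      case True
      have "G = E - Q"
      proof
        show "G \<subseteq> E - Q" using PQ gf(2) by blast
        show "E - Q \<subseteq> G" using PQ p True sub[OF NN(1)] by blast
      qed
      then show ?thesis by blast
    next
      case False
      have "G = P"
      proof
        show "P \<subseteq> G" using PQ by blast
        show "G \<subseteq> P" using PQ p False gf(2) by blast
      qed
      then show ?thesis by blast
    qed
  qed
  have "g \<in> cutsOf X \<N>"
    using cases
  proof
    assume h: "N1 \<subseteq> G \<and> N2 \<inter> G = {}"
    have "G = N1 \<or> G = E - N2" by (rule key) (use h c in auto)
    then show ?thesis
    proof
      assume "G = N1" then show ?thesis using g_in[OF g(1) gf(6) c(1)] by blast
    next
      assume "G = E - N2" then show ?thesis using g_in[OF g(1) gf(6) c(2)] by blast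
    qed
  next
    assume h: "N2 \<subseteq> G \<and> N1 \<inter> G = {}"
    have "G = N2 \<or> G = E - N1" by (rule key) (use h c in auto)
    then show ?thesis
    proof
      assume "G = N2" then show ?thesis using g_in[OF g(1) gf(6) c(2)] by blast
    next
      assume "G = E - N1" then show ?thesis using g_in[OF g(1) gf(6) c(1)] by blast
    qed
  qed
  then show False using g(2) by blast
qed

lemma pants: "pants_decomposition X (cutsOf X \<N>)"
  unfolding pants_decomposition_def
  using p_np p_comp p_fin p_max cnt unfolding cutsOf_def[symmetric]
  by (simp add: cutsOf_def)

end


definition atom :: "'a topology \<Rightarrow> (nat \<Rightarrow> 'a set) \<Rightarrow> nat \<Rightarrow> 'a \<Rightarrow> 'a set" where
  "atom X C n x = {y \<in> topspace X. \<forall>i<n. (y \<in> C i \<longleftrightarrow> x \<in> C i)}"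

definition atoms :: "'a topology \<Rightarrow> (nat \<Rightarrow> 'a set) \<Rightarrow> 'a set set" where
  "atoms X C = {atom X C n x | n x. x \<in> topspace X}"

lemma atom_0: "atom X C 0 x = topspace X" by (simp add: atom_def)

lemma atom_Suc: "atom X C (Suc n) x = atom X C n x \<inter> {y. y \<in> C n \<longleftrightarrow> x \<in> C n}"
  unfolding atom_def by (auto simp: less_Suc_eq)

lemma atom_sub: "atom X C n x \<subseteq> topspace X" by (auto simp: atom_def)

lemma atom_self: "x \<in> topspace X \<Longrightarrow> x \<in> atom X C n x" by (simp add: atom_def)

lemma atom_eq: "y \<in> atom X C n x \<Longrightarrow> atom X C n y = atom X C n x"
  unfolding atom_def by auto

lemma atom_mono: "m \<le> n \<Longrightarrow> atom X C n x \<subseteq> atom X C m x"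
  unfolding atom_def by auto

lemma atom_clopen:
  assumes "\<And>i. clopenin X (C i)"
  shows "clopenin X (atom X C n x)"
proof (induction n)
  case 0 then show ?case by (simp add: atom_0 clopenin_def)
next
  case (Suc n)
  have "atom X C (Suc n) x = atom X C n x \<inter> (if x \<in> C n then C n else topspace X - C n)"
    unfolding atom_Suc using atom_sub[of X C n x] by auto
  then show ?case using Suc.IH clopen_Int[OF Suc.IH assms[of n]] clopen_Int[OF Suc.IH clopen_diff[OF assms[of n]]]
    by (simp split: if_splits)
qed

lemma atom_lam:
  "atom X C n x \<subseteq> atom X C m y \<or> atom X C m y \<subseteq> atom X C n x \<or> atom X C n x \<inter> atom X C m y = {}"
proof (cases "atom X C n x \<inter> atom X C m y = {}")
  case False
  then obtain z where z: "z \<in> atom X C n x" "z \<in> atom X C m y" by blast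
  have "atom X C n x = atom X C n z" "atom X C m y = atom X C m z" using atom_eq z by metis+
  then show ?thesis using atom_mono[of m n X C z] atom_mono[of n m X C z] by (metis nat_le_linear)
qed simp

lemma atom_level_finite: "finite {atom X C n x | x. x \<in> topspace X}"
proof -
  have "{atom X C n x | x. x \<in> topspace X} \<subseteq>
      (\<lambda>I. {y \<in> topspace X. \<forall>i<n. (y \<in> C i \<longleftrightarrow> i \<in> I)}) ` Pow {..<n}"
  proof
    fix A assume "A \<in> {atom X C n x | x. x \<in> topspace X}"
    then obtain x where "A = atom X C n x" by blast
    then have "A = (\<lambda>I. {y \<in> topspace X. \<forall>i<n. (y \<in> C i \<longleftrightarrow> i \<in> I)}) {i. i < n \<and> x \<in> C i}"
      unfolding atom_def by auto
    then show "A \<in> (\<lambda>I. {y \<in> topspace X. \<forall>i<n. (y \<in> C i \<longleftrightarrow> i \<in> I)}) ` Pow {..<n}" by blast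
  qed
  then show ?thesis by (rule finite_subset) simp
qed

lemma atoms_UN: "atoms X C = (\<Union>n. {atom X C n x | x. x \<in> topspace X})"
  unfolding atoms_def by blast

lemma atoms_countable: "countable (atoms X C)"
  unfolding atoms_UN
  by (rule countable_UN) (auto intro: countable_finite atom_level_finite)

lemma atoms_fin:
  assumes "T = C m"
  shows "finite {N\<in>atoms X C. N \<inter> T \<noteq> {} \<and> N - T \<noteq> {}}"
proof -
  have "{N\<in>atoms X C. N \<inter> T \<noteq> {} \<and> N - T \<noteq> {}} \<subseteq> (\<Union>n\<in>{..m}. {atom X C n x | x. x \<in> topspace X})"
  proof
    fix N assume N: "N \<in> {N\<in>atoms X C. N \<inter> T \<noteq> {} \<and> N - T \<noteq> {}}"
    then obtain n x where nx: "N = atom X C n x" "x \<in> topspace X" unfolding atoms_def by blast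
    have "n \<le> m"
    proof (rule ccontr)
      assume "\<not> n \<le> m"
      then have "m < n" by simp
      then have "\<forall>y\<in>N. (y \<in> C m \<longleftrightarrow> x \<in> C m)" unfolding nx atom_def by blast
      then show False using N assms by blast
    qed
    then show "N \<in> (\<Union>n\<in>{..m}. {atom X C n x | x. x \<in> topspace X})" using nx by blast
  qed
  moreover have "finite (\<Union>n\<in>{..m}. {atom X C n x | x. x \<in> topspace X})"
    using atom_level_finite by blast
  ultimately show ?thesis by (rule finite_subset)
qed

lemma atom_const:
  assumes "n \<le> k" "\<forall>j. n \<le> j \<and> j < k \<longrightarrow> (\<forall>y\<in>atom X C n x. \<forall>z\<in>atom X C n x. (y \<in> C j \<longleftrightarrow> z \<in> C j))"
    "x \<in> topspace X"
  shows "atom X C k x = atom X C n x"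
  using assms(1,2)
proof (induction k rule: dec_induct)
  case base then show ?case by simp
next
  case (step k)
  let ?Q = "\<lambda>j. \<forall>y\<in>atom X C n x. \<forall>z\<in>atom X C n x. (y \<in> C j \<longleftrightarrow> z \<in> C j)"
  have P: "\<And>j. n \<le> j \<Longrightarrow> j < Suc k \<Longrightarrow> ?Q j" using step.prems by blast
  have "\<forall>j. n \<le> j \<and> j < k \<longrightarrow> ?Q j" using P less_SucI by blast
  then have IH: "atom X C k x = atom X C n x" by (rule step.IH)
  have xin: "x \<in> atom X C n x" using assms(3) by (rule atom_self)
  have "?Q k" using P step.hyps by blast
  then have "\<forall>y\<in>atom X C n x. (y \<in> C k \<longleftrightarrow> x \<in> C k)" using xin by blast
  then show ?case unfolding atom_Suc IH by blast
qed

lemma atoms_child: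
  assumes sep: "\<And>y z. y \<in> topspace X \<Longrightarrow> z \<in> topspace X \<Longrightarrow> y \<noteq> z \<Longrightarrow> \<exists>j. y \<in> C j \<and> z \<notin> C j"
    and N: "N \<in> atoms X C" and tp: "two_points N"
  shows "\<exists>N1\<in>atoms X C. \<exists>N2\<in>atoms X C. N1 \<inter> N2 = {} \<and> N1 \<union> N2 = N \<and> N1 \<noteq> {} \<and> N2 \<noteq> {}"
proof -
  obtain n x where nx: "N = atom X C n x" "x \<in> topspace X" using N unfolding atoms_def by blast
  obtain y z where yz: "y \<in> N" "z \<in> N" "y \<noteq> z" using tp unfolding two_points_def by blast
  have "N \<subseteq> topspace X" using nx(1) atom_sub by simp
  then have yzE: "y \<in> topspace X" "z \<in> topspace X" using yz by blast+
  obtain j where j: "y \<in> C j" "z \<notin> C j" using sep[OF yzE yz(3)] by blast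
  let ?P = "\<lambda>k. n \<le> k \<and> (\<exists>y\<in>N. \<exists>z\<in>N. y \<in> C k \<and> z \<notin> C k)"
  have "n \<le> j"
  proof (rule ccontr)
    assume "\<not> n \<le> j"
    then have "j < n" by simp
    then show False using yz j unfolding nx atom_def by blast
  qed
  then have Pj: "?P j" using yz j by blast
  define k where "k = (LEAST k. ?P k)"
  have Pk: "?P k" unfolding k_def by (rule LeastI[where P="?P", OF Pj])
  have lt: "\<And>i. i < k \<Longrightarrow> \<not> ?P i" unfolding k_def by (rule not_less_Least)
  have "\<forall>i. n \<le> i \<and> i < k \<longrightarrow> (\<forall>y\<in>atom X C n x. \<forall>z\<in>atom X C n x. (y \<in> C i \<longleftrightarrow> z \<in> C i))"
    using lt nx(1) by blast
  note Q = this
  have nk: "n \<le> k" using Pk by blast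
  have Nk: "atom X C k x = N" unfolding nx(1) by (rule atom_const[OF nk Q nx(2)])
  obtain y' z' where yz': "y' \<in> N" "z' \<in> N" "y' \<in> C k" "z' \<notin> C k" using Pk by blast
  obtain w where w: "w \<in> N" "\<not> (w \<in> C k \<longleftrightarrow> x \<in> C k)"
  proof (cases "x \<in> C k")
    case True then show ?thesis using that yz' by blast
  next
    case False then show ?thesis using that yz' by blast
  qed
  have wE: "w \<in> topspace X" using w(1) \<open>N \<subseteq> topspace X\<close> by blast
  have "w \<in> atom X C k x" using w(1) Nk by simp
  then have "atom X C k w = atom X C k x" by (rule atom_eq)
  then have Nkw: "atom X C k w = N" using Nk by simp
  define N1 where "N1 = atom X C (Suc k) x"
  define N2 where "N2 = atom X C (Suc k) w"
  have N1e: "N1 = N \<inter> {y. y \<in> C k \<longleftrightarrow> x \<in> C k}" unfolding N1_def atom_Suc Nk ..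
  have N2e: "N2 = N \<inter> {y. y \<in> C k \<longleftrightarrow> w \<in> C k}" unfolding N2_def atom_Suc Nkw ..
  have "N1 \<in> atoms X C" "N2 \<in> atoms X C" unfolding N1_def N2_def atoms_def using nx(2) wE by blast+
  moreover have "N1 \<inter> N2 = {}" "N1 \<union> N2 = N" using w(2) unfolding N1e N2e by blast+
  moreover have "x \<in> N1" "w \<in> N2" using atom_self nx(2) wE unfolding N1_def N2_def by metis+
  ultimately show ?thesis by blast
qed

lemma atoms_tree:
  assumes clo: "\<And>i. clopenin X (C i)"
    and surj: "\<And>T. clopenin X T \<Longrightarrow> \<exists>m. C m = T"
    and sep: "\<And>y z. y \<in> topspace X \<Longrightarrow> z \<in> topspace X \<Longrightarrow> y \<noteq> z \<Longrightarrow> \<exists>j. y \<in> C j \<and> z \<notin> C j"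
    and ne: "topspace X \<noteq> {}"
  shows "tree X (atoms X C)"
proof
  show "countable (atoms X C)" by (rule atoms_countable)
next
  fix N assume "N \<in> atoms X C"
  then obtain n x where "N = atom X C n x" unfolding atoms_def by blast
  then show "clopenin X N" using atom_clopen[of X C, OF clo] by simp
next
  fix N M assume "N \<in> atoms X C" "M \<in> atoms X C"
  then obtain n x m y where "N = atom X C n x" "M = atom X C m y" unfolding atoms_def by blast
  then show "N \<subseteq> M \<or> M \<subseteq> N \<or> N \<inter> M = {}" using atom_lam[of X C n x m y] by simp
next
  obtain x where "x \<in> topspace X" using ne by blast
  then show "topspace X \<in> atoms X C" unfolding atoms_def using atom_0[of X C x] by blast
next
  fix N assume NA: "N \<in> atoms X C" "two_points N"
  show "\<exists>N1\<in>atoms X C. \<exists>N2\<in>atoms X C. N1 \<inter> N2 = {} \<and> N1 \<union> N2 = N \<and> N1 \<noteq> {} \<and> N2 \<noteq> {}"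
    by (rule atoms_child[OF sep NA])
next
  fix T assume "clopenin X T"
  then obtain m where "C m = T" using surj by blast
  then have "T = C m" by simp
  then show "finite {N\<in>atoms X C. N \<inter> T \<noteq> {} \<and> N - T \<noteq> {}}" by (rule atoms_fin)
qed



lemma split2:
  assumes "stone_space X" "clopenin X U" "x \<in> U" "y \<in> U" "x \<noteq> y"
  shows "\<exists>U1 U2. clopenin X U1 \<and> clopenin X U2 \<and> U1 \<inter> U2 = {} \<and> U1 \<union> U2 = U \<and> x \<in> U1 \<and> y \<in> U2"
proof -
  have UE: "U \<subseteq> topspace X" using assms(2) by (rule clopen_sub)
  have "x \<in> topspace X" "y \<in> topspace X" using UE assms(3,4) by blast+
  then obtain D where D: "clopenin X D" "x \<in> D" "y \<notin> D" using stone_sep[OF assms(1) _ _ assms(5)] by blast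
  have c1: "clopenin X (U \<inter> D)" by (rule clopen_Int[OF assms(2) D(1)])
  have c2: "clopenin X (U \<inter> (topspace X - D))" by (rule clopen_Int[OF assms(2) clopen_diff[OF D(1)]])
  have e: "U \<inter> (topspace X - D) = U - D" using UE by blast
  have "(U \<inter> D) \<inter> (U - D) = {}" "(U \<inter> D) \<union> (U - D) = U" "x \<in> U \<inter> D" "y \<in> U - D"
    using D assms(3,4) by blast+
  then show ?thesis using c1 c2 unfolding e by blast
qed

lemma split3:
  assumes "stone_space X" "clopenin X U" "x \<in> U" "y \<in> U" "z \<in> U" "x \<noteq> y" "x \<noteq> z" "y \<noteq> z"
  shows "\<exists>U1 U2. clopenin X U1 \<and> clopenin X U2 \<and> U1 \<inter> U2 = {} \<and> U1 \<union> U2 = U \<and> U1 \<noteq> {} \<and> two_points U2"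
proof -
  obtain P Q where PQ: "clopenin X P" "clopenin X Q" "P \<inter> Q = {}" "P \<union> Q = U" "x \<in> P" "y \<in> Q"
    using split2[OF assms(1-4,6)] by blast
  show ?thesis
  proof (cases "z \<in> P")
    case True
    then have "two_points P" using PQ(5) assms(7) unfolding two_points_def by blast
    then have "clopenin X Q \<and> clopenin X P \<and> Q \<inter> P = {} \<and> Q \<union> P = U \<and> Q \<noteq> {} \<and> two_points P"
      using PQ by blast
    then show ?thesis by blast
  next
    case False
    then have "z \<in> Q" using PQ(4) assms(5) by blast
    then have "two_points Q" using PQ(6) assms(8) unfolding two_points_def by blast
    then have "clopenin X P \<and> clopenin X Q \<and> P \<inter> Q = {} \<and> P \<union> Q = U \<and> P \<noteq> {} \<and> two_points Q"
      using PQ by blast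
    then show ?thesis by blast
  qed
qed

lemma split4:
  assumes "stone_space X" "clopenin X U" "p1 \<in> U" "p2 \<in> U" "p3 \<in> U" "p4 \<in> U"
    "p1 \<noteq> p2" "p1 \<noteq> p3" "p1 \<noteq> p4" "p2 \<noteq> p3" "p2 \<noteq> p4" "p3 \<noteq> p4"
  shows "\<exists>U1 U2. clopenin X U1 \<and> clopenin X U2 \<and> U1 \<inter> U2 = {} \<and> U1 \<union> U2 = U \<and> two_points U1 \<and> two_points U2"
proof -
  obtain P Q where PQ: "clopenin X P" "clopenin X Q" "P \<inter> Q = {}" "P \<union> Q = U" "p1 \<in> P" "p2 \<in> Q"
    using split2[OF assms(1-4,7)] by blast
  show ?thesis
  proof (cases "two_points P \<and> two_points Q")
    case True then show ?thesis using PQ by blast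
  next
    case False
    then show ?thesis
    proof (elim disjE[OF de_Morgan_conj[THEN iffD1]])
      assume nP: "\<not> two_points P"
      then have "p3 \<notin> P" "p4 \<notin> P" using PQ(5) assms(8,9) unfolding two_points_def by blast+
      then have "p3 \<in> Q" "p4 \<in> Q" using PQ(4) assms(5,6) by blast+
      then obtain Q1 Q2 where Q: "clopenin X Q1" "clopenin X Q2" "Q1 \<inter> Q2 = {}" "Q1 \<union> Q2 = Q" "Q1 \<noteq> {}" "two_points Q2"
        using split3[OF assms(1) PQ(2) PQ(6) _ _ assms(10,11,12)] by blast
      obtain q where q: "q \<in> Q1" using Q(5) by blast
      have "two_points (P \<union> Q1)" using q PQ(5,3) Q(4) unfolding two_points_def by blast
      moreover have "clopenin X (P \<union> Q1)" using clopen_Un PQ(1) Q(1) by blast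
      moreover have "(P \<union> Q1) \<inter> Q2 = {}" "(P \<union> Q1) \<union> Q2 = U" using PQ(3,4) Q(3,4) by blast+
      ultimately show ?thesis using Q(2,6) by blast
    next
      assume nQ: "\<not> two_points Q"
      then have "p3 \<notin> Q" "p4 \<notin> Q" using PQ(6) assms(10,11) unfolding two_points_def by blast+
      then have "p3 \<in> P" "p4 \<in> P" using PQ(4) assms(5,6) by blast+
      then obtain Q1 Q2 where Q: "clopenin X Q1" "clopenin X Q2" "Q1 \<inter> Q2 = {}" "Q1 \<union> Q2 = P" "Q1 \<noteq> {}" "two_points Q2"
        using split3[OF assms(1) PQ(1) PQ(5) _ _ assms(8,9,12)] by blast
      obtain q where q: "q \<in> Q1" using Q(5) by blast
      have "two_points (Q \<union> Q1)" using q PQ(6,3) Q(4) unfolding two_points_def by blast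
      moreover have "clopenin X (Q \<union> Q1)" using clopen_Un PQ(2) Q(1) by blast
      moreover have "(Q \<union> Q1) \<inter> Q2 = {}" "(Q \<union> Q1) \<union> Q2 = U" using PQ(3,4) Q(3,4) by blast+
      ultimately show ?thesis using Q(2,6) by blast
    qed
  qed
qed

definition lamr :: "'a set \<Rightarrow> 'a set \<Rightarrow> bool" where
  "lamr N M \<longleftrightarrow> N \<subseteq> M \<or> M \<subseteq> N \<or> N \<inter> M = {}"

lemma adjB1:
  fixes E A A1 A2 B B1 B2 B11 B12 N G :: "'a set"
  assumes p: "A \<union> B = E" "A \<inter> B = {}" "A1 \<union> A2 = A" "A1 \<inter> A2 = {}" "B1 \<union> B2 = B" "B1 \<inter> B2 = {}"
    "B11 \<union> B12 = B1" "B11 \<inter> B12 = {}"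
    and ne: "A1 \<noteq> {}" "A2 \<noteq> {}" "B11 \<noteq> {}" "B12 \<noteq> {}" "B2 \<noteq> {}"
    and l: "lamr N A" "lamr N A1" "lamr N A2" "lamr N B" "lamr N B1" "lamr N B2" "lamr N B11" "lamr N B12"
    and NE: "N \<subseteq> E" and G: "G = A2 \<union> B2 \<union> B11"
    and c: "N \<inter> G \<noteq> {}" "N - G \<noteq> {}" "(E - N) \<inter> G \<noteq> {}" "(E - N) - G \<noteq> {}"
  shows "N = A \<or> N = B \<or> N = B1"
proof -
  have lA: "N \<subseteq> A \<or> A \<subseteq> N \<or> N \<inter> A = {}" using l(1) by (simp add: lamr_def)
  show ?thesis
  proof (rule disjE[OF lA]; (elim disjE)?)
    assume "N \<subseteq> A"
    have "N \<subseteq> A2 \<or> A2 \<subseteq> N \<or> N \<inter> A2 = {}" using l(3) by (simp add: lamr_def)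
    then show ?thesis
    proof (elim disjE)
      assume "N \<subseteq> A2" then show ?thesis using c(2) G by blast
    next
      assume h: "A2 \<subseteq> N"
      have "N \<subseteq> A1 \<or> A1 \<subseteq> N \<or> N \<inter> A1 = {}" using l(2) by (simp add: lamr_def)
      then show ?thesis
      proof (elim disjE)
        assume "N \<subseteq> A1" then show ?thesis using h p(4) ne(2) by blast
      next
        assume "A1 \<subseteq> N" then show ?thesis using h \<open>N \<subseteq> A\<close> p(3) by blast
      next
        assume "N \<inter> A1 = {}" then have "N = A2" using h \<open>N \<subseteq> A\<close> p(3) by blast
        then show ?thesis using c(2) G by blast
      qed
    next
      assume "N \<inter> A2 = {}" then have "N \<subseteq> A1" using \<open>N \<subseteq> A\<close> p(3) by blast
      then show ?thesis using c(1) G p(2,3,4,5,7) by blast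
    qed
  next
    assume h: "A \<subseteq> N"
    have "N \<subseteq> B \<or> B \<subseteq> N \<or> N \<inter> B = {}" using l(4) by (simp add: lamr_def)
    then show ?thesis
    proof (elim disjE)
      assume "N \<subseteq> B" then show ?thesis using h p(2,3) ne(1) by blast
    next
      assume "B \<subseteq> N" then have "E - N = {}" using h p(1) by blast
      then show ?thesis using c(3) by blast
    next
      assume "N \<inter> B = {}" then show ?thesis using h p(1) NE by blast
    qed
  next
    assume "N \<inter> A = {}"
    then have NB: "N \<subseteq> B" using NE p(1) by blast
    have "N \<subseteq> B1 \<or> B1 \<subseteq> N \<or> N \<inter> B1 = {}" using l(5) by (simp add: lamr_def)
    then show ?thesis
    proof (elim disjE)
      assume NB1: "N \<subseteq> B1"
      have "N \<subseteq> B11 \<or> B11 \<subseteq> N \<or> N \<inter> B11 = {}" using l(7) by (simp add: lamr_def)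
      then show ?thesis
      proof (elim disjE)
        assume "N \<subseteq> B11" then show ?thesis using c(2) G by blast
      next
        assume h: "B11 \<subseteq> N"
        have "N \<subseteq> B12 \<or> B12 \<subseteq> N \<or> N \<inter> B12 = {}" using l(8) by (simp add: lamr_def)
        then show ?thesis
        proof (elim disjE)
          assume "N \<subseteq> B12" then show ?thesis using h p(8) ne(3) by blast
        next
          assume "B12 \<subseteq> N" then show ?thesis using h NB1 p(7) by blast
        next
          assume "N \<inter> B12 = {}" then have "N \<subseteq> B11" using NB1 p(7) by blast
          then show ?thesis using c(2) G by blast
        qed
      next
        assume "N \<inter> B11 = {}" then have "N \<subseteq> B12" using NB1 p(7) by blast
        then show ?thesis using c(1) G p(2,3,5,6,7,8) by blast
      qed
    next
      assume h: "B1 \<subseteq> N"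
      have "N \<subseteq> B2 \<or> B2 \<subseteq> N \<or> N \<inter> B2 = {}" using l(6) by (simp add: lamr_def)
      then show ?thesis
      proof (elim disjE)
        assume "N \<subseteq> B2" then show ?thesis using h p(6,7) ne(3) by blast
      next
        assume "B2 \<subseteq> N" then show ?thesis using h NB p(5) by blast
      next
        assume "N \<inter> B2 = {}" then show ?thesis using h NB p(5) by blast
      qed
    next
      assume "N \<inter> B1 = {}" then have "N \<subseteq> B2" using NB p(5) by blast
      then show ?thesis using c(2) G by blast
    qed
  qed
qed

lemma adjA2:
  fixes E A A1 A2 A21 A22 B B1 B2 N G :: "'a set"
  assumes p: "A \<union> B = E" "A \<inter> B = {}" "A1 \<union> A2 = A" "A1 \<inter> A2 = {}" "A21 \<union> A22 = A2" "A21 \<inter> A22 = {}"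
    "B1 \<union> B2 = B" "B1 \<inter> B2 = {}"
    and ne: "A1 \<noteq> {}" "A21 \<noteq> {}" "A22 \<noteq> {}" "B1 \<noteq> {}" "B2 \<noteq> {}"
    and l: "lamr N A" "lamr N A1" "lamr N A2" "lamr N A21" "lamr N A22" "lamr N B" "lamr N B1" "lamr N B2"
    and NE: "N \<subseteq> E" and G: "G = A21 \<union> B1"
    and c: "N \<inter> G \<noteq> {}" "N - G \<noteq> {}" "(E - N) \<inter> G \<noteq> {}" "(E - N) - G \<noteq> {}"
  shows "N = A \<or> N = B \<or> N = A2"
proof -
  have lA: "N \<subseteq> A \<or> A \<subseteq> N \<or> N \<inter> A = {}" using l(1) by (simp add: lamr_def)
  show ?thesis
  proof (rule disjE[OF lA]; (elim disjE)?)
    assume NA: "N \<subseteq> A"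
    have "N \<subseteq> A2 \<or> A2 \<subseteq> N \<or> N \<inter> A2 = {}" using l(3) by (simp add: lamr_def)
    then show ?thesis
    proof (elim disjE)
      assume NA2: "N \<subseteq> A2"
      have "N \<subseteq> A21 \<or> A21 \<subseteq> N \<or> N \<inter> A21 = {}" using l(4) by (simp add: lamr_def)
      then show ?thesis
      proof (elim disjE)
        assume "N \<subseteq> A21" then show ?thesis using c(2) G by blast
      next
        assume h: "A21 \<subseteq> N"
        have "N \<subseteq> A22 \<or> A22 \<subseteq> N \<or> N \<inter> A22 = {}" using l(5) by (simp add: lamr_def)
        then show ?thesis
        proof (elim disjE)
          assume "N \<subseteq> A22" then show ?thesis using h p(6) ne(2) by blast
        next
          assume "A22 \<subseteq> N" then show ?thesis using h NA2 p(5) by blast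
        next
          assume "N \<inter> A22 = {}" then have "N \<subseteq> A21" using NA2 p(5) by blast
          then show ?thesis using c(2) G by blast
        qed
      next
        assume "N \<inter> A21 = {}" then have "N \<subseteq> A22" using NA2 p(5) by blast
        then show ?thesis using c(1) G p(2,3,5,6,7) by blast
      qed
    next
      assume h: "A2 \<subseteq> N"
      have "N \<subseteq> A1 \<or> A1 \<subseteq> N \<or> N \<inter> A1 = {}" using l(2) by (simp add: lamr_def)
      then show ?thesis
      proof (elim disjE)
        assume "N \<subseteq> A1" then show ?thesis using h p(4,5) ne(2) by blast
      next
        assume "A1 \<subseteq> N" then show ?thesis using h NA p(3) by blast
      next
        assume "N \<inter> A1 = {}" then show ?thesis using h NA p(3) by blast
      qed
    next
      assume "N \<inter> A2 = {}" then have "N \<subseteq> A1" using NA p(3) by blast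
      then show ?thesis using c(1) G p(2,3,4,5,7) by blast
    qed
  next
    assume h: "A \<subseteq> N"
    have "N \<subseteq> B \<or> B \<subseteq> N \<or> N \<inter> B = {}" using l(6) by (simp add: lamr_def)
    then show ?thesis
    proof (elim disjE)
      assume "N \<subseteq> B" then show ?thesis using h p(2,3) ne(1) by blast
    next
      assume "B \<subseteq> N" then have "E - N = {}" using h p(1) by blast
      then show ?thesis using c(3) by blast
    next
      assume "N \<inter> B = {}" then show ?thesis using h p(1) NE by blast
    qed
  next
    assume "N \<inter> A = {}"
    then have NB: "N \<subseteq> B" using NE p(1) by blast
    have "N \<subseteq> B1 \<or> B1 \<subseteq> N \<or> N \<inter> B1 = {}" using l(7) by (simp add: lamr_def)
    then show ?thesis
    proof (elim disjE)
      assume "N \<subseteq> B1" then show ?thesis using c(2) G by blast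
    next
      assume h: "B1 \<subseteq> N"
      have "N \<subseteq> B2 \<or> B2 \<subseteq> N \<or> N \<inter> B2 = {}" using l(8) by (simp add: lamr_def)
      then show ?thesis
      proof (elim disjE)
        assume "N \<subseteq> B2" then show ?thesis using h p(8) ne(4) by blast
      next
        assume "B2 \<subseteq> N" then show ?thesis using h NB p(7) by blast
      next
        assume "N \<inter> B2 = {}" then have "N = B1" using h NB p(7) by blast
        then show ?thesis using c(2) G by blast
      qed
    next
      assume "N \<inter> B1 = {}" then have "N \<subseteq> B2" using NB p(7) by blast
      then show ?thesis using c(1) G p(2,3,5,7,8) by blast
    qed
  qed
qed



lemma crosses_pair2: "crosses {P, Q} {R, S} \<longleftrightarrow> P \<inter> R \<noteq> {} \<and> P \<inter> S \<noteq> {} \<and> Q \<inter> R \<noteq> {} \<and> Q \<inter> S \<noteq> {}"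
  unfolding crosses_def by auto

locale bk =
  fixes X :: "'a topology" and A A1 A2 A21 A22 B B1 B2 B11 B12 B21 B22 :: "'a set"
  assumes st: "stone_space X" and sc: "second_countable X"
    and cA: "clopenin X A" and cA1: "clopenin X A1" and cA2: "clopenin X A2"
    and cA21: "clopenin X A21" and cA22: "clopenin X A22" and cB1: "clopenin X B1" and cB2: "clopenin X B2"
    and cB11: "clopenin X B11" and cB12: "clopenin X B12" and cB21: "clopenin X B21" and cB22: "clopenin X B22"
    and AE: "A \<subseteq> topspace X" and BE: "B = topspace X - A"
    and pA: "A1 \<union> A2 = A" "A1 \<inter> A2 = {}" and pA2: "A21 \<union> A22 = A2" "A21 \<inter> A22 = {}"
    and pB: "B1 \<union> B2 = B" "B1 \<inter> B2 = {}" and pB1: "B11 \<union> B12 = B1" "B11 \<inter> B12 = {}"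
    and pB2: "B21 \<union> B22 = B2" "B21 \<inter> B22 = {}"
    and ne: "A1 \<noteq> {}" "A21 \<noteq> {}" "A22 \<noteq> {}" "B11 \<noteq> {}" "B12 \<noteq> {}" "B21 \<noteq> {}" "B22 \<noteq> {}"
    and tp: "two_points A" "two_points B" "two_points A2" "two_points B1" "two_points B2"
begin

abbreviation "E \<equiv> topspace X"

definition K where "K = {T. clopenin X T}"
definition f where "f = from_nat_into K"
definition C where "C n = (if n = 0 then A else if n = 1 then A1 \<union> B1 else if n = 2 then A21 \<union> B11 \<union> B21 else f (n - 3))"

lemma Kne: "K \<noteq> {}" unfolding K_def clopenin_def by auto

lemma Kc: "countable K" unfolding K_def
  using countable_clopens sc st by (auto simp: stone_space_def)

lemma fK: "f n \<in> K" unfolding f_def using from_nat_into[OF Kne] .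

lemma Cclo: "clopenin X (C i)"
proof -
  have "clopenin X (A1 \<union> B1)" using clopen_Un cA1 cB1 by blast
  moreover have "clopenin X (A21 \<union> B11 \<union> B21)" using clopen_Un cA21 cB11 cB21 by blast
  moreover have "clopenin X (f (i - 3))" using fK unfolding K_def by blast
  ultimately show ?thesis unfolding C_def using cA by simp
qed

lemma Csurj: "clopenin X T \<Longrightarrow> \<exists>m. C m = T"
proof -
  assume "clopenin X T"
  then have "T \<in> range f" unfolding f_def using range_from_nat_into[OF Kne Kc] K_def by simp
  then obtain m where "T = f m" by blast
  then have "C (m + 3) = T" unfolding C_def by simp
  then show ?thesis by blast
qed

lemma Csep: "y \<in> E \<Longrightarrow> z \<in> E \<Longrightarrow> y \<noteq> z \<Longrightarrow> \<exists>j. y \<in> C j \<and> z \<notin> C j"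
proof -
  assume "y \<in> E" "z \<in> E" "y \<noteq> z"
  then obtain T where T: "clopenin X T" "y \<in> T" "z \<notin> T" using stone_sep[OF st] by blast
  obtain m where "C m = T" using Csurj[OF T(1)] by blast
  then show ?thesis using T by blast
qed

lemma Ene: "E \<noteq> {}" using ne(1) pA(1) AE by blast

lemma tr: "tree X (atoms X C)"
  by (rule atoms_tree[OF Cclo Csurj Csep Ene])

lemma Cs: "C 0 = A" "C (Suc 0) = A1 \<union> B1" "C (Suc (Suc 0)) = A21 \<union> B11 \<union> B21"
  by (simp_all add: C_def)

lemma at1: "atom X C (Suc 0) x = E \<inter> {y. y \<in> A \<longleftrightarrow> x \<in> A}"
  by (simp only: atom_Suc atom_0 Cs)
lemma at2: "atom X C (Suc (Suc 0)) x = E \<inter> {y. y \<in> A \<longleftrightarrow> x \<in> A} \<inter> {y. y \<in> A1 \<union> B1 \<longleftrightarrow> x \<in> A1 \<union> B1}"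
  by (simp only: atom_Suc atom_0 Cs)
lemma at3: "atom X C (Suc (Suc (Suc 0))) x = E \<inter> {y. y \<in> A \<longleftrightarrow> x \<in> A} \<inter> {y. y \<in> A1 \<union> B1 \<longleftrightarrow> x \<in> A1 \<union> B1}
   \<inter> {y. y \<in> A21 \<union> B11 \<union> B21 \<longleftrightarrow> x \<in> A21 \<union> B11 \<union> B21}"
  by (simp only: atom_Suc atom_0 Cs)

lemma inat: "x \<in> E \<Longrightarrow> atom X C n x \<in> atoms X C" unfolding atoms_def by blast

lemma subs: "A1 \<subseteq> A" "A2 \<subseteq> A" "A21 \<subseteq> A" "A22 \<subseteq> A" "B \<subseteq> E" "B1 \<subseteq> B" "B2 \<subseteq> B"
  "B11 \<subseteq> B" "B12 \<subseteq> B" "B21 \<subseteq> B" "B22 \<subseteq> B" "A \<inter> B = {}" "A \<union> B = E"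
  using pA pA2 pB pB1 pB2 AE BE by blast+

lemma memI: "x \<in> E \<Longrightarrow> S = atom X C n x \<Longrightarrow> S \<in> atoms X C" using inat by simp

lemma memA: "A \<in> atoms X C"
proof -
  obtain a where a: "a \<in> A1" using ne(1) by blast
  have aE: "a \<in> E" using a subs AE by blast
  show ?thesis by (rule memI[OF aE, of _ "Suc 0"]) (unfold at1, use a subs AE in blast)
qed

lemma memB: "B \<in> atoms X C"
proof -
  obtain a where a: "a \<in> B11" using ne(4) by blast
  have aE: "a \<in> E" using a subs by blast
  show ?thesis by (rule memI[OF aE, of _ "Suc 0"]) (unfold at1, use a subs BE in blast)
qed

lemma memA1: "A1 \<in> atoms X C"
proof -
  obtain a where a: "a \<in> A1" using ne(1) by blast
  have aE: "a \<in> E" using a subs AE by blast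
  show ?thesis by (rule memI[OF aE, of _ "Suc (Suc 0)"]) (unfold at2, use a subs AE pA pB in auto)
qed

lemma memA2: "A2 \<in> atoms X C"
proof -
  obtain a where a: "a \<in> A21" using ne(2) by blast
  have aE: "a \<in> E" using a subs AE by blast
  show ?thesis by (rule memI[OF aE, of _ "Suc (Suc 0)"]) (unfold at2, use a subs AE pA pA2 pB in auto)
qed

lemma memB1: "B1 \<in> atoms X C"
proof -
  obtain a where a: "a \<in> B11" using ne(4) by blast
  have aE: "a \<in> E" using a subs by blast
  show ?thesis by (rule memI[OF aE, of _ "Suc (Suc 0)"]) (unfold at2, use a subs BE pA pB pB1 in auto)
qed

lemma memB2: "B2 \<in> atoms X C"
proof -
  obtain a where a: "a \<in> B21" using ne(6) by blast
  have aE: "a \<in> E" using a subs by blast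
  show ?thesis by (rule memI[OF aE, of _ "Suc (Suc 0)"]) (unfold at2, use a subs BE pA pB pB2 in auto)
qed

lemma memA21: "A21 \<in> atoms X C"
proof -
  obtain a where a: "a \<in> A21" using ne(2) by blast
  have aE: "a \<in> E" using a subs AE by blast
  have h: "a \<in> A" "a \<notin> A1 \<union> B1" "a \<in> A21 \<union> B11 \<union> B21" using a subs(1-4,6,8,10,12) AE pA pA2 by auto
  have eq: "atom X C (Suc (Suc (Suc 0))) a = E \<inter> {y. y \<in> A} \<inter> {y. y \<notin> A1 \<union> B1} \<inter> {y. y \<in> A21 \<union> B11 \<union> B21}"
    unfolding at3 using h by simp
  have "A21 = E \<inter> {y. y \<in> A} \<inter> {y. y \<notin> A1 \<union> B1} \<inter> {y. y \<in> A21 \<union> B11 \<union> B21}"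
    using subs(1-4,6,8,10,12) AE pA pA2 by auto
  then show ?thesis using memI[OF aE, of _ "Suc (Suc (Suc 0))"] eq by simp
qed

lemma memA22: "A22 \<in> atoms X C"
proof -
  obtain a where a: "a \<in> A22" using ne(3) by blast
  have aE: "a \<in> E" using a subs AE by blast
  have h: "a \<in> A" "a \<notin> A1 \<union> B1" "a \<notin> A21 \<union> B11 \<union> B21" using a subs(1-4,6,8,10,12) AE pA pA2 by auto
  have eq: "atom X C (Suc (Suc (Suc 0))) a = E \<inter> {y. y \<in> A} \<inter> {y. y \<notin> A1 \<union> B1} \<inter> {y. y \<notin> A21 \<union> B11 \<union> B21}"
    unfolding at3 using h by simp
  have "A22 = E \<inter> {y. y \<in> A} \<inter> {y. y \<notin> A1 \<union> B1} \<inter> {y. y \<notin> A21 \<union> B11 \<union> B21}"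
    using subs(1-4,6,8,10,12) AE pA pA2 by auto
  then show ?thesis using memI[OF aE, of _ "Suc (Suc (Suc 0))"] eq by simp
qed

lemma memB11: "B11 \<in> atoms X C"
proof -
  obtain a where a: "a \<in> B11" using ne(4) by blast
  have aE: "a \<in> E" using a subs AE by blast
  have h: "a \<notin> A" "a \<in> A1 \<union> B1" "a \<in> A21 \<union> B11 \<union> B21" using a subs(1-12) AE BE pA pA2 pB pB1 pB2 by auto
  have eq: "atom X C (Suc (Suc (Suc 0))) a = E \<inter> {y. y \<notin> A} \<inter> {y. y \<in> A1 \<union> B1} \<inter> {y. y \<in> A21 \<union> B11 \<union> B21}"
    unfolding at3 using h by simp
  have "B11 = E \<inter> {y. y \<notin> A} \<inter> {y. y \<in> A1 \<union> B1} \<inter> {y. y \<in> A21 \<union> B11 \<union> B21}"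
    using subs(1-12) AE BE pA pA2 pB pB1 pB2 by auto
  then show ?thesis using memI[OF aE, of _ "Suc (Suc (Suc 0))"] eq by simp
qed

lemma memB12: "B12 \<in> atoms X C"
proof -
  obtain a where a: "a \<in> B12" using ne(5) by blast
  have aE: "a \<in> E" using a subs AE by blast
  have h: "a \<notin> A" "a \<in> A1 \<union> B1" "a \<notin> A21 \<union> B11 \<union> B21" using a subs(1-12) AE BE pA pA2 pB pB1 pB2 by auto
  have eq: "atom X C (Suc (Suc (Suc 0))) a = E \<inter> {y. y \<notin> A} \<inter> {y. y \<in> A1 \<union> B1} \<inter> {y. y \<notin> A21 \<union> B11 \<union> B21}"
    unfolding at3 using h by simp
  have "B12 = E \<inter> {y. y \<notin> A} \<inter> {y. y \<in> A1 \<union> B1} \<inter> {y. y \<notin> A21 \<union> B11 \<union> B21}"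
    using subs(1-12) AE BE pA pA2 pB pB1 pB2 by auto
  then show ?thesis using memI[OF aE, of _ "Suc (Suc (Suc 0))"] eq by simp
qed

lemma memB21: "B21 \<in> atoms X C"
proof -
  obtain a where a: "a \<in> B21" using ne(6) by blast
  have aE: "a \<in> E" using a subs AE by blast
  have h: "a \<notin> A" "a \<notin> A1 \<union> B1" "a \<in> A21 \<union> B11 \<union> B21" using a subs(1-12) AE BE pA pA2 pB pB1 pB2 by auto
  have eq: "atom X C (Suc (Suc (Suc 0))) a = E \<inter> {y. y \<notin> A} \<inter> {y. y \<notin> A1 \<union> B1} \<inter> {y. y \<in> A21 \<union> B11 \<union> B21}"
    unfolding at3 using h by simp
  have "B21 = E \<inter> {y. y \<notin> A} \<inter> {y. y \<notin> A1 \<union> B1} \<inter> {y. y \<in> A21 \<union> B11 \<union> B21}"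
    using subs(1-12) AE BE pA pA2 pB pB1 pB2 by auto
  then show ?thesis using memI[OF aE, of _ "Suc (Suc (Suc 0))"] eq by simp
qed

lemma memB22: "B22 \<in> atoms X C"
proof -
  obtain a where a: "a \<in> B22" using ne(7) by blast
  have aE: "a \<in> E" using a subs AE by blast
  have h: "a \<notin> A" "a \<notin> A1 \<union> B1" "a \<notin> A21 \<union> B11 \<union> B21" using a subs(1-12) AE BE pA pA2 pB pB1 pB2 by auto
  have eq: "atom X C (Suc (Suc (Suc 0))) a = E \<inter> {y. y \<notin> A} \<inter> {y. y \<notin> A1 \<union> B1} \<inter> {y. y \<notin> A21 \<union> B11 \<union> B21}"
    unfolding at3 using h by simp
  have "B22 = E \<inter> {y. y \<notin> A} \<inter> {y. y \<notin> A1 \<union> B1} \<inter> {y. y \<notin> A21 \<union> B11 \<union> B21}"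
    using subs(1-12) AE BE pA pA2 pB pB1 pB2 by auto
  then show ?thesis using memI[OF aE, of _ "Suc (Suc (Suc 0))"] eq by simp
qed

definition \<Gamma> where "\<Gamma> = cutsOf X (atoms X C)"

lemma pd: "pants_decomposition X \<Gamma>" unfolding \<Gamma>_def by (rule tree.pants[OF tr])

lemma lamN: "N \<in> atoms X C \<Longrightarrow> S \<in> atoms X C \<Longrightarrow> lamr N S"
  unfolding lamr_def using tree.lam[OF tr] by blast

lemma inG: "N \<in> atoms X C \<Longrightarrow> two_points N \<Longrightarrow> two_points (E - N) \<Longrightarrow> {N, E - N} \<in> \<Gamma>"
  unfolding \<Gamma>_def by (rule tree.in_cuts[OF tr])

lemma inG_elim: "e \<in> \<Gamma> \<Longrightarrow> \<exists>N. N \<in> atoms X C \<and> e = {N, E - N}"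
  unfolding \<Gamma>_def cutsOf_def by blast

lemma atE: "N \<in> atoms X C \<Longrightarrow> N \<subseteq> E"
  using tree.sub[OF tr] by blast

lemma EB: "E - B = A" "E - A = B" using AE BE by blast+

lemma cB: "clopenin X B" using BE clopen_diff cA by blast

lemma gam: "{A, B} \<in> \<Gamma>" using inG[OF memA tp(1)] tp(2) EB by simp

lemma tpE: "two_points (E - A2)" "two_points (E - B1)" "two_points (E - B2)"
proof -
  have "B \<subseteq> E - A2" "A \<subseteq> E - B1" "A \<subseteq> E - B2" using subs by auto
  then show "two_points (E - A2)" "two_points (E - B1)" "two_points (E - B2)"
    using tp(1,2) unfolding two_points_def by blast+
qed

lemma dA2: "{A2, E - A2} \<in> \<Gamma>" using inG[OF memA2 tp(3) tpE(1)] .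
lemma dB1: "{B1, E - B1} \<in> \<Gamma>" using inG[OF memB1 tp(4) tpE(2)] .
lemma dB2: "{B2, E - B2} \<in> \<Gamma>" using inG[OF memB2 tp(5) tpE(3)] .

lemma pts: obtains a1 a21 a22 b11 b12 b21 b22 where "a1 \<in> A1" "a21 \<in> A21" "a22 \<in> A22"
  "b11 \<in> B11" "b12 \<in> B12" "b21 \<in> B21" "b22 \<in> B22"
  using ne by blast

lemma cross_elim:
  assumes "e \<in> \<Gamma>" "crosses {G, E - G} e" "G \<subseteq> E"
  obtains N where "N \<in> atoms X C" "e = {N, E - N}" "N \<inter> G \<noteq> {}" "N - G \<noteq> {}" "(E - N) \<inter> G \<noteq> {}" "(E - N) - G \<noteq> {}"
proof -
  obtain N where N: "N \<in> atoms X C" "e = {N, E - N}" using inG_elim[OF assms(1)] by blast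
  have "G \<inter> N \<noteq> {}" "G \<inter> (E - N) \<noteq> {}" "(E - G) \<inter> N \<noteq> {}" "(E - G) \<inter> (E - N) \<noteq> {}"
    using assms(2) unfolding N(2) crosses_pair2 by auto
  then have "N \<inter> G \<noteq> {}" "N - G \<noteq> {}" "(E - N) \<inter> G \<noteq> {}" "(E - N) - G \<noteq> {}"
    using atE[OF N(1)] by blast+
  then show ?thesis using that N by blast
qed

lemma e_cases:
  assumes "N = A \<or> N = B \<or> N = D" "e = {N, E - N}"
  shows "e = {A, B} \<or> e = {D, E - D}"
  using assms EB by auto

lemma ne2: "A2 \<noteq> {}" "B1 \<noteq> {}" "B2 \<noteq> {}" "A \<noteq> {}" "B \<noteq> {}"
  using tp unfolding two_points_def by auto

lemma adj_B1: "adjacent_in X \<Gamma> {A, B} {B1, E - B1}"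
proof -
  obtain a1 a21 a22 b11 b12 b21 b22 where P: "a1 \<in> A1" "a21 \<in> A21" "a22 \<in> A22"
    "b11 \<in> B11" "b12 \<in> B12" "b21 \<in> B21" "b22 \<in> B22" by (rule pts)
  define G where "G = A2 \<union> B2 \<union> B11"
  have Gc: "clopenin X G" unfolding G_def by (rule clopen_Un[OF clopen_Un[OF cA2 cB2] cB11])
  have GE: "G \<subseteq> E" by (rule clopen_sub[OF Gc])
  have t1: "two_points G" using tp(3) unfolding G_def two_points_def by blast
  have m: "a21 \<in> G" "b11 \<in> G" "a1 \<in> E - G" "b12 \<in> E - G" "a21 \<in> A" "b11 \<in> B" "a1 \<in> A"
    "b12 \<in> B" "b11 \<in> B1" "b12 \<in> B1" "a21 \<in> E - B1" "a1 \<in> E - B1" "a1 \<notin> B1" "b21 \<in> B" "b21 \<notin> B1"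
    using P subs AE pA pA2 pB pB1 pB2 unfolding G_def by auto
  have "a1 \<in> E - G" "b12 \<in> E - G" "a1 \<noteq> b12" using m subs(12) by auto
  then have t2: "two_points (E - G)" unfolding two_points_def by blast
  have np: "nonperipheral_cut X {G, E - G}" by (rule np_cut_intro[OF Gc t1 t2])
  have c1: "crosses {G, E - G} {A, B}" unfolding crosses_pair2 using m by blast
  have c2: "crosses {G, E - G} {B1, E - B1}" unfolding crosses_pair2 using m by blast
  have c3: "\<forall>e\<in>\<Gamma>. crosses {G, E - G} e \<longrightarrow> e = {A, B} \<or> e = {B1, E - B1}"
  proof (intro ballI impI)
    fix e assume e: "e \<in> \<Gamma>" "crosses {G, E - G} e"
    obtain N where N: "N \<in> atoms X C" "e = {N, E - N}" "N \<inter> G \<noteq> {}" "N - G \<noteq> {}"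
        "(E - N) \<inter> G \<noteq> {}" "(E - N) - G \<noteq> {}"
      by (rule cross_elim[OF e GE])
    have "N = A \<or> N = B \<or> N = B1"
      by (rule adjB1[OF subs(13,12) pA pB pB1 ne(1) ne2(1) ne(4,5) ne2(3)
            lamN[OF N(1) memA] lamN[OF N(1) memA1] lamN[OF N(1) memA2] lamN[OF N(1) memB]
            lamN[OF N(1) memB1] lamN[OF N(1) memB2] lamN[OF N(1) memB11] lamN[OF N(1) memB12]
            atE[OF N(1)] G_def N(3-6)])
    then show "e = {A, B} \<or> e = {B1, E - B1}" by (rule e_cases[OF _ N(2)])
  qed
  have "A \<noteq> B1" "B \<noteq> B1" using m by blast+
  then have ne1: "{A, B} \<noteq> {B1, E - B1}" by (auto simp: doubleton_eq_iff)
  have ex: "\<exists>g. nonperipheral_cut X g \<and> crosses g {A, B} \<and> crosses g {B1, E - B1} \<and>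
      (\<forall>e\<in>\<Gamma>. crosses g e \<longrightarrow> e = {A, B} \<or> e = {B1, E - B1})"
    by (intro exI[of _ "{G, E - G}"] conjI np c1 c2 c3)
  show ?thesis unfolding adjacent_in_def using gam dB1 ne1 ex by blast
qed

lemma adj_B2: "adjacent_in X \<Gamma> {A, B} {B2, E - B2}"
proof -
  obtain a1 a21 a22 b11 b12 b21 b22 where P: "a1 \<in> A1" "a21 \<in> A21" "a22 \<in> A22"
    "b11 \<in> B11" "b12 \<in> B12" "b21 \<in> B21" "b22 \<in> B22" by (rule pts)
  define G where "G = A2 \<union> B1 \<union> B21"
  have Gc: "clopenin X G" unfolding G_def by (rule clopen_Un[OF clopen_Un[OF cA2 cB1] cB21])
  have GE: "G \<subseteq> E" by (rule clopen_sub[OF Gc])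
  have t1: "two_points G" using tp(3) unfolding G_def two_points_def by blast
  have m: "a21 \<in> G" "b21 \<in> G" "a1 \<in> E - G" "b22 \<in> E - G" "a21 \<in> A" "b21 \<in> B" "a1 \<in> A"
    "b22 \<in> B" "b21 \<in> B2" "b22 \<in> B2" "a21 \<in> E - B2" "a1 \<in> E - B2" "a1 \<notin> B2" "b11 \<in> B" "b11 \<notin> B2"
    using P subs AE pA pA2 pB pB1 pB2 unfolding G_def by auto
  have "a1 \<in> E - G" "b22 \<in> E - G" "a1 \<noteq> b22" using m subs(12) by auto
  then have t2: "two_points (E - G)" unfolding two_points_def by blast
  have np: "nonperipheral_cut X {G, E - G}" by (rule np_cut_intro[OF Gc t1 t2])
  have c1: "crosses {G, E - G} {A, B}" unfolding crosses_pair2 using m by blast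
  have c2: "crosses {G, E - G} {B2, E - B2}" unfolding crosses_pair2 using m by blast
  have c3: "\<forall>e\<in>\<Gamma>. crosses {G, E - G} e \<longrightarrow> e = {A, B} \<or> e = {B2, E - B2}"
  proof (intro ballI impI)
    fix e assume e: "e \<in> \<Gamma>" "crosses {G, E - G} e"
    obtain N where N: "N \<in> atoms X C" "e = {N, E - N}" "N \<inter> G \<noteq> {}" "N - G \<noteq> {}"
        "(E - N) \<inter> G \<noteq> {}" "(E - N) - G \<noteq> {}"
      by (rule cross_elim[OF e GE])
    have "N = A \<or> N = B \<or> N = B2"
      by (rule adjB1[OF subs(13,12) pA _ _ pB2 ne(1) ne2(1) ne(6,7) ne2(2)
            lamN[OF N(1) memA] lamN[OF N(1) memA1] lamN[OF N(1) memA2] lamN[OF N(1) memB]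
            lamN[OF N(1) memB2] lamN[OF N(1) memB1] lamN[OF N(1) memB21] lamN[OF N(1) memB22]
            atE[OF N(1)] G_def N(3-6)]) (use pB in blast)+
    then show "e = {A, B} \<or> e = {B2, E - B2}" by (rule e_cases[OF _ N(2)])
  qed
  have "A \<noteq> B2" "B \<noteq> B2" using m by blast+
  then have ne1: "{A, B} \<noteq> {B2, E - B2}" by (auto simp: doubleton_eq_iff)
  have ex: "\<exists>g. nonperipheral_cut X g \<and> crosses g {A, B} \<and> crosses g {B2, E - B2} \<and>
      (\<forall>e\<in>\<Gamma>. crosses g e \<longrightarrow> e = {A, B} \<or> e = {B2, E - B2})"
    by (intro exI[of _ "{G, E - G}"] conjI np c1 c2 c3)
  show ?thesis unfolding adjacent_in_def using gam dB2 ne1 ex by blast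
qed

lemma adj_A2: "adjacent_in X \<Gamma> {A, B} {A2, E - A2}"
proof -
  obtain a1 a21 a22 b11 b12 b21 b22 where P: "a1 \<in> A1" "a21 \<in> A21" "a22 \<in> A22"
    "b11 \<in> B11" "b12 \<in> B12" "b21 \<in> B21" "b22 \<in> B22" by (rule pts)
  define G where "G = A21 \<union> B1"
  have Gc: "clopenin X G" unfolding G_def by (rule clopen_Un[OF cA21 cB1])
  have GE: "G \<subseteq> E" by (rule clopen_sub[OF Gc])
  have t1: "two_points G" using P subs(3,6,12) pB1 unfolding G_def two_points_def by blast
  have m: "a21 \<in> G" "b11 \<in> G" "a1 \<in> E - G" "b21 \<in> E - G" "a22 \<in> E - G" "a21 \<in> A" "b11 \<in> B" "a1 \<in> A"
    "b21 \<in> B" "a21 \<in> A2" "a22 \<in> A2" "b11 \<in> E - A2" "a1 \<in> E - A2" "a1 \<notin> A2" "b11 \<notin> A2"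
    using P subs AE pA pA2 pB pB1 pB2 unfolding G_def by auto
  have "a1 \<in> E - G" "b21 \<in> E - G" "a1 \<noteq> b21" using m subs(12) by auto
  then have t2: "two_points (E - G)" unfolding two_points_def by blast
  have np: "nonperipheral_cut X {G, E - G}" by (rule np_cut_intro[OF Gc t1 t2])
  have c1: "crosses {G, E - G} {A, B}" unfolding crosses_pair2 using m by blast
  have c2: "crosses {G, E - G} {A2, E - A2}" unfolding crosses_pair2 using m by blast
  have c3: "\<forall>e\<in>\<Gamma>. crosses {G, E - G} e \<longrightarrow> e = {A, B} \<or> e = {A2, E - A2}"
  proof (intro ballI impI)
    fix e assume e: "e \<in> \<Gamma>" "crosses {G, E - G} e"
    obtain N where N: "N \<in> atoms X C" "e = {N, E - N}" "N \<inter> G \<noteq> {}" "N - G \<noteq> {}"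
        "(E - N) \<inter> G \<noteq> {}" "(E - N) - G \<noteq> {}"
      by (rule cross_elim[OF e GE])
    have "N = A \<or> N = B \<or> N = A2"
      by (rule adjA2[OF subs(13,12) pA pA2 pB ne(1,2,3) ne2(2,3)
            lamN[OF N(1) memA] lamN[OF N(1) memA1] lamN[OF N(1) memA2] lamN[OF N(1) memA21]
            lamN[OF N(1) memA22] lamN[OF N(1) memB] lamN[OF N(1) memB1] lamN[OF N(1) memB2]
            atE[OF N(1)] G_def N(3-6)])
    then show "e = {A, B} \<or> e = {A2, E - A2}" by (rule e_cases[OF _ N(2)])
  qed
  have "A \<noteq> A2" "B \<noteq> A2" using m by blast+
  then have ne1: "{A, B} \<noteq> {A2, E - A2}" by (auto simp: doubleton_eq_iff)
  have ex: "\<exists>g. nonperipheral_cut X g \<and> crosses g {A, B} \<and> crosses g {A2, E - A2} \<and>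
      (\<forall>e\<in>\<Gamma>. crosses g e \<longrightarrow> e = {A, B} \<or> e = {A2, E - A2})"
    by (intro exI[of _ "{G, E - G}"] conjI np c1 c2 c3)
  show ?thesis unfolding adjacent_in_def using gam dA2 ne1 ex by blast
qed

lemma main_bk: "pants_decomposition X \<Gamma> \<and> {A, B} \<in> \<Gamma> \<and> \<not> valence_le_two X \<Gamma> {A, B}"
proof -
  obtain a1 a21 a22 b11 b12 b21 b22 where P: "a1 \<in> A1" "a21 \<in> A21" "a22 \<in> A22"
    "b11 \<in> B11" "b12 \<in> B12" "b21 \<in> B21" "b22 \<in> B22" by (rule pts)
  have m: "a21 \<in> A2" "a21 \<notin> B1" "b21 \<in> E - B1" "b21 \<notin> A2" "a21 \<notin> B2" "b11 \<in> E - B2" "b11 \<notin> A2"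
    "b11 \<in> B1" "b11 \<notin> B2" "a1 \<in> E - B2" "a1 \<notin> B1"
    using P subs AE pA pA2 pB pB1 pB2 by auto
  have "A2 \<noteq> B1" "A2 \<noteq> E - B1" "A2 \<noteq> B2" "A2 \<noteq> E - B2" "B1 \<noteq> B2" "B1 \<noteq> E - B2"
    using m by blast+
  then have d: "{A2, E - A2} \<noteq> {B1, E - B1}" "{A2, E - A2} \<noteq> {B2, E - B2}" "{B1, E - B1} \<noteq> {B2, E - B2}"
    by (auto simp: doubleton_eq_iff)
  let ?S = "{d. adjacent_in X \<Gamma> {A, B} d}"
  have sub: "{{A2, E - A2}, {B1, E - B1}, {B2, E - B2}} \<subseteq> ?S" using adj_A2 adj_B1 adj_B2 by blast
  have c3: "card {{A2, E - A2}, {B1, E - B1}, {B2, E - B2}} = 3" using d by simp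
  have "\<not> valence_le_two X \<Gamma> {A, B}"
  proof
    assume "valence_le_two X \<Gamma> {A, B}"
    then have "finite ?S" "card ?S \<le> 2" unfolding valence_le_two_def by blast+
    then show False using card_mono[OF _ sub] c3 by simp
  qed
  then show ?thesis using pd gam by blast
qed

end


lemma three_pts:
  assumes "two_points U" "\<not> (finite U \<and> card U = 2)"
  shows "\<exists>x y z. x \<in> U \<and> y \<in> U \<and> z \<in> U \<and> x \<noteq> y \<and> x \<noteq> z \<and> y \<noteq> z"
proof -
  obtain x y where xy: "x \<in> U" "y \<in> U" "x \<noteq> y" using assms(1) unfolding two_points_def by blast
  show ?thesis
  proof (cases "U \<subseteq> {x, y}")
    case True
    then have "U = {x, y}" using xy by blast
    then have "finite U \<and> card U = 2" using xy(3) by simp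
    then show ?thesis using assms(2) by blast
  next
    case False
    then obtain z where "z \<in> U" "z \<noteq> x" "z \<noteq> y" by blast
    then show ?thesis using xy by blast
  qed
qed

definition four :: "'a set \<Rightarrow> bool" where
  "four U \<longleftrightarrow> (\<exists>p1 p2 p3 p4. p1 \<in> U \<and> p2 \<in> U \<and> p3 \<in> U \<and> p4 \<in> U \<and>
     p1 \<noteq> p2 \<and> p1 \<noteq> p3 \<and> p1 \<noteq> p4 \<and> p2 \<noteq> p3 \<and> p2 \<noteq> p4 \<and> p3 \<noteq> p4)"

lemma small3:
  assumes "x \<in> U" "y \<in> U" "z \<in> U" "x \<noteq> y" "x \<noteq> z" "y \<noteq> z" "\<not> four U"
  shows "U \<subseteq> {x, y, z}"
proof
  fix w assume "w \<in> U"
  show "w \<in> {x, y, z}"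
  proof (rule ccontr)
    assume "w \<notin> {x, y, z}"
    then have "four U" unfolding four_def using assms(1-6) \<open>w \<in> U\<close>
      by (intro exI[of _ x] exI[of _ y] exI[of _ z] exI[of _ w]) auto
    then show False using assms(7) by blast
  qed
qed

lemma backward:
  assumes st: "stone_space X" and sc: "second_countable X"
    and sz: "infinite (topspace X) \<or> card (topspace X) \<ge> 7"
    and np: "nonperipheral_cut X \<gamma>" and no: "\<not> outermost_cut X \<gamma>"
  shows "\<exists>\<Gamma>. pants_decomposition X \<Gamma> \<and> \<gamma> \<in> \<Gamma> \<and> \<not> valence_le_two X \<Gamma> \<gamma>"
proof -
  let ?E = "topspace X"
  have side: "\<exists>x y z. x \<in> S \<and> y \<in> S \<and> z \<in> S \<and> x \<noteq> y \<and> x \<noteq> z \<and> y \<noteq> z" if "S \<in> \<gamma>" for S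
  proof (rule three_pts)
    show "two_points S" using np_side[OF np that] by blast
    show "\<not> (finite S \<and> card S = 2)" using no np that unfolding outermost_cut_def by blast
  qed
  obtain U0 where U0: "U0 \<in> \<gamma>" using np unfolding nonperipheral_cut_def is_cut_def by blast
  have U0f: "\<gamma> = {U0, ?E - U0}" "U0 \<subseteq> ?E" using np_side[OF np U0] by auto
  have "four U0 \<or> four (?E - U0)"
  proof (rule ccontr)
    assume "\<not> (four U0 \<or> four (?E - U0))"
    then have n4: "\<not> four U0" "\<not> four (?E - U0)" by blast+
    obtain x y z where xyz: "x \<in> U0" "y \<in> U0" "z \<in> U0" "x \<noteq> y" "x \<noteq> z" "y \<noteq> z" using side[OF U0] by blast
    have "?E - U0 \<in> \<gamma>" using U0f by simp
    then obtain x' y' z' where xyz': "x' \<in> ?E - U0" "y' \<in> ?E - U0" "z' \<in> ?E - U0" "x' \<noteq> y'" "x' \<noteq> z'" "y' \<noteq> z'"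
      using side[OF \<open>?E - U0 \<in> \<gamma>\<close>] by blast
    have s1: "U0 \<subseteq> {x, y, z}" by (rule small3[OF xyz n4(1)])
    have s2: "?E - U0 \<subseteq> {x', y', z'}" by (rule small3[OF xyz' n4(2)])
    have sub: "?E \<subseteq> set [x, y, z, x', y', z']" using s1 s2 by auto
    have fin: "finite ?E" using finite_subset[OF sub] by simp
    have "card ?E \<le> card (set [x, y, z, x', y', z'])" by (rule card_mono[OF _ sub]) simp
    also have "\<dots> \<le> length [x, y, z, x', y', z']" by (rule card_length)
    finally have "card ?E \<le> 6" by simp
    moreover have "7 \<le> card ?E" using sz fin by blast
    ultimately show False by linarith
  qed
  moreover have "?E - U0 \<in> \<gamma>" using U0f by simp
  ultimately obtain B where B: "B \<in> \<gamma>" "four B" using U0 by blast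
  have Bf: "\<gamma> = {B, ?E - B}" "clopenin X B" "B \<subseteq> ?E" "two_points B" "two_points (?E - B)"
    using np_side[OF np B(1)] by auto
  define A where "A = ?E - B"
  have AE: "A \<subseteq> ?E" and BE: "B = ?E - A" unfolding A_def using Bf(3) by blast+
  have gAB: "\<gamma> = {A, B}" using Bf(1) unfolding A_def by (simp add: insert_commute)
  have cA: "clopenin X A" unfolding A_def using clopen_diff[OF Bf(2)] .
  have tpA: "two_points A" using Bf(5) unfolding A_def .
  have "A \<in> \<gamma>" using gAB by simp
  then obtain x y z where xyz: "x \<in> A" "y \<in> A" "z \<in> A" "x \<noteq> y" "x \<noteq> z" "y \<noteq> z" using side[OF \<open>A \<in> \<gamma>\<close>] by blast
  obtain A1 A2 where As: "clopenin X A1" "clopenin X A2" "A1 \<inter> A2 = {}" "A1 \<union> A2 = A" "A1 \<noteq> {}" "two_points A2"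
    using split3[OF st cA xyz] by blast
  obtain u v where uv: "u \<in> A2" "v \<in> A2" "u \<noteq> v" using As(6) unfolding two_points_def by blast
  obtain A21 A22 where A2s: "clopenin X A21" "clopenin X A22" "A21 \<inter> A22 = {}" "A21 \<union> A22 = A2" "u \<in> A21" "v \<in> A22"
    using split2[OF st As(2) uv] by blast
  obtain p1 p2 p3 p4 where p: "p1 \<in> B" "p2 \<in> B" "p3 \<in> B" "p4 \<in> B"
     "p1 \<noteq> p2" "p1 \<noteq> p3" "p1 \<noteq> p4" "p2 \<noteq> p3" "p2 \<noteq> p4" "p3 \<noteq> p4"
    using B(2) unfolding four_def by blast
  obtain B1 B2 where Bs: "clopenin X B1" "clopenin X B2" "B1 \<inter> B2 = {}" "B1 \<union> B2 = B" "two_points B1" "two_points B2"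
    using split4[OF st Bf(2) p] by blast
  obtain u1 v1 where uv1: "u1 \<in> B1" "v1 \<in> B1" "u1 \<noteq> v1" using Bs(5) unfolding two_points_def by blast
  obtain B11 B12 where B1s: "clopenin X B11" "clopenin X B12" "B11 \<inter> B12 = {}" "B11 \<union> B12 = B1" "u1 \<in> B11" "v1 \<in> B12"
    using split2[OF st Bs(1) uv1] by blast
  obtain u2 v2 where uv2: "u2 \<in> B2" "v2 \<in> B2" "u2 \<noteq> v2" using Bs(6) unfolding two_points_def by blast
  obtain B21 B22 where B2s: "clopenin X B21" "clopenin X B22" "B21 \<inter> B22 = {}" "B21 \<union> B22 = B2" "u2 \<in> B21" "v2 \<in> B22"
    using split2[OF st Bs(2) uv2] by blast
  have nes: "A21 \<noteq> {}" "A22 \<noteq> {}" "B11 \<noteq> {}" "B12 \<noteq> {}" "B21 \<noteq> {}" "B22 \<noteq> {}"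
    using A2s B1s B2s by blast+
  have bk: "bk X A A1 A2 A21 A22 B B1 B2 B11 B12 B21 B22"
    by (rule bk.intro[OF st sc cA As(1) As(2) A2s(1) A2s(2) Bs(1) Bs(2) B1s(1) B1s(2) B2s(1) B2s(2)
          AE BE As(4) As(3) A2s(4) A2s(3) Bs(4) Bs(3) B1s(4) B1s(3) B2s(4) B2s(3)
          As(5) nes tpA Bf(4) As(6) Bs(5) Bs(6)])
  note mb = bk.main_bk[OF bk]
  show ?thesis unfolding gAB using mb by blast
qed

theorem mainTheorem7:
  fixes X :: "'a topology" and \<gamma> :: "'a set set"
  assumes "stone_space X" and "second_countable X"
    and "infinite (topspace X) \<or> card (topspace X) \<ge> 7"
    and "nonperipheral_cut X \<gamma>"
  shows "outermost_cut X \<gamma> \<longleftrightarrow>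
           (\<forall>\<Gamma>. pants_decomposition X \<Gamma> \<and> \<gamma> \<in> \<Gamma> \<longrightarrow> valence_le_two X \<Gamma> \<gamma>)"
proof
  assume "outermost_cut X \<gamma>"
  then show "\<forall>\<Gamma>. pants_decomposition X \<Gamma> \<and> \<gamma> \<in> \<Gamma> \<longrightarrow> valence_le_two X \<Gamma> \<gamma>"
    using forward by blast
next
  assume h: "\<forall>\<Gamma>. pants_decomposition X \<Gamma> \<and> \<gamma> \<in> \<Gamma> \<longrightarrow> valence_le_two X \<Gamma> \<gamma>"
  show "outermost_cut X \<gamma>"
  proof (rule ccontr)
    assume "\<not> outermost_cut X \<gamma>"
    then obtain \<Gamma> where "pants_decomposition X \<Gamma>" "\<gamma> \<in> \<Gamma>" "\<not> valence_le_two X \<Gamma> \<gamma>"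
      using backward[OF assms] by blast
    then show False using h by blast
  qed
qed


end
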